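(* Let $\mathcal F$ be a filtration sequence, $E=(E_{m,n})_{m,n\in\mathbb N}$ a nonnegative process adapted to $\mathcal F$, and $r=(r_m)_{m\in\mathbb N}$ an extended integer sequence. The following are equivalent: (i) $E$ is an $r$-asymptotic e-process for $\mathcal P$ and $\mathcal F$; (ii) for every $\tau=(\tau_m)_{m\in\mathbb N}\in\mathcal T_{\mathrm{fin}}(r,\mathcal F,\mathcal P)$, $\limsup_{m\to\infty}\sup_{P\in\mathcal P}\mathbb E_P[E_{m,\tau_m}]\le 1$; (iii) there exists a family $(L^P_{m,n})_{(m,n,P)\in\mathbb N\times\mathbb N\times\mathcal P}$ of nonnegative random variables, with $L^P_{m,\bullet}$ adapted to $\mathcal F_{m,\bullet}$, and some $m_0\in\mathbb N$ such that: (a) $L^P_{m,n}\ge E_{m,n}$ $P$-a.s. for all $m,n\in\mathbb N$ and $P\in\mathcal P$; (b) $L^P_{m,n}$ is $P$-integrable for all $m\ge m_0$, all $n\in\mathbb N$ with $n\le r_m$, and all $P\in\mathcal P$; (c) for all $m\ge m_0$, all $P\in\mathcal P$ and all $n\in\mathbb N$ with $n\le r_m-1$, $\mathbb E_P[L^P_{m,n+1}\mid\mathcal F_{m,n}]\le L^P_{m,n}$ $P$-a.s.; (d) $\limsup_{m\to\infty}\sup_{P\in\mathcal P}\mathbb E_P[L^P_{m,0}]\le 1$.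
   Context: $(\Omega,\mathcal A)$ is a measurable space and $\mathcal P$ a set of probability measures on it. $\mathbb N=\{0,1,\dots\}$; an extended integer is an element of $\mathbb N\cup\{\infty\}$ (with $\infty-1=\infty$). Nonnegative random variables take values in $[0,\infty]$ with $\mathbb E_P[X]:=\infty$ if not $P$-integrable. For a process $(X_n)$, $X_\infty:=\limsup_n X_n$ pointwise (so $E_{m,\tau}$ is defined when $\tau=\infty$). A filtration sequence is a family $(\mathcal F_{m,n})_{m,n\in\mathbb N}$ of sub-$\sigma$-algebras of $\mathcal A$ such that each $\mathcal F_{m,\bullet}$ is a filtration; adapted means $E_{m,n}$ is $\mathcal F_{m,n}$-measurable. For a filtration $\mathcal G$ and $\rho\in\mathbb N\cup\{\infty\}$, $\mathcal T(\rho,\mathcal G,\mathcal P)$ is the set of $\mathcal G$-stopping times $\tau$ (values in $\mathbb N\cup\{\infty\}$) with $P[\tau\le\rho]=1$ for all $P\in\mathcal P$, and $\mathcal T_{\mathrm{fin}}(\rho,\mathcal G,\mathcal P)$ its subset of stopping times finite at every $\omega$. $\mathcal T(r,\mathcal F,\mathcal P)$ (resp. $\mathcal T_{\mathrm{fin}}(r,\mathcal F,\mathcal P)$) is the set of sequences $(\tau_m)$ with $\tau_m\in\mathcal T(r_m,\mathcal F_{m,\bullet},\mathcal P)$ (resp. $\mathcal T_{\mathrm{fin}}(r_m,\mathcal F_{m,\bullet},\mathcal P)$). A nonnegative adapted process $E$ is an $r$-asymptotic e-process if for every $\tau\in\mathcal T(r,\mathcal F,\mathcal P)$, $\limsup_{m\to\infty}\sup_{P\in\mathcal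 P}\mathbb E_P[E_{m,\tau_m}]\le 1$. *)

theory Defs
  imports "HOL-Probability.Probability"
begin

definition filtration_seq :: "'a measure \<Rightarrow> (nat \<Rightarrow> nat \<Rightarrow> 'a measure) \<Rightarrow> bool" where
  "filtration_seq M F \<longleftrightarrow>
     (\<forall>m n. subalgebra M (F m n)) \<and> (\<forall>m n. sets (F m n) \<subseteq> sets (F m (Suc n)))"

definition adapted_seq :: "(nat \<Rightarrow> nat \<Rightarrow> 'a measure) \<Rightarrow> (nat \<Rightarrow> nat \<Rightarrow> 'a \<Rightarrow> ennreal) \<Rightarrow> bool" where
  "adapted_seq F E \<longleftrightarrow> (\<forall>m n. E m n \<in> borel_measurable (F m n))"

definition is_stopping_time :: "'a measure \<Rightarrow> (nat \<Rightarrow> 'a measure) \<Rightarrow> ('a \<Rightarrow> enat) \<Rightarrow> bool" where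
  "is_stopping_time M G \<tau> \<longleftrightarrow> (\<forall>n::nat. {\<omega> \<in> space M. \<tau> \<omega> \<le> enat n} \<in> sets (G n))"

definition ST :: "'a measure \<Rightarrow> 'a measure set \<Rightarrow> (nat \<Rightarrow> 'a measure) \<Rightarrow> enat \<Rightarrow> ('a \<Rightarrow> enat) set" where
  "ST M Ps G \<rho> = {\<tau>. is_stopping_time M G \<tau> \<and>
       (\<forall>P\<in>Ps. emeasure P {\<omega> \<in> space M. \<tau> \<omega> \<le> \<rho>} = 1)}"

definition ST_fin :: "'a measure \<Rightarrow> 'a measure set \<Rightarrow> (nat \<Rightarrow> 'a measure) \<Rightarrow> enat \<Rightarrow> ('a \<Rightarrow> enat) set" where
  "ST_fin M Ps G \<rho> = {\<tau> \<in> ST M Ps G \<rho>. \<forall>\<omega>\<in>space M. \<tau> \<omega> \<noteq> \<infinity>}"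

definition STseq :: "'a measure \<Rightarrow> 'a measure set \<Rightarrow> (nat \<Rightarrow> nat \<Rightarrow> 'a measure) \<Rightarrow> (nat \<Rightarrow> enat) \<Rightarrow> (nat \<Rightarrow> 'a \<Rightarrow> enat) set" where
  "STseq M Ps F r = {\<tau>. \<forall>m. \<tau> m \<in> ST M Ps (F m) (r m)}"

definition STseq_fin :: "'a measure \<Rightarrow> 'a measure set \<Rightarrow> (nat \<Rightarrow> nat \<Rightarrow> 'a measure) \<Rightarrow> (nat \<Rightarrow> enat) \<Rightarrow> (nat \<Rightarrow> 'a \<Rightarrow> enat) set" where
  "STseq_fin M Ps F r = {\<tau>. \<forall>m. \<tau> m \<in> ST_fin M Ps (F m) (r m)}"

definition stopped :: "(nat \<Rightarrow> nat \<Rightarrow> 'a \<Rightarrow> ennreal) \<Rightarrow> nat \<Rightarrow> ('a \<Rightarrow> enat) \<Rightarrow> 'a \<Rightarrow> ennreal" where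
  "stopped E m \<tau> \<omega> = (case \<tau> \<omega> of enat n \<Rightarrow> E m n \<omega> | \<infinity> \<Rightarrow> limsup (\<lambda>n. E m n \<omega>))"

text \<open>E_P[X] for nonnegative X is the nonnegative integral (= \<infinity> if not integrable).\<close>
definition asym_eprocess :: "'a measure \<Rightarrow> 'a measure set \<Rightarrow> (nat \<Rightarrow> nat \<Rightarrow> 'a measure) \<Rightarrow> (nat \<Rightarrow> enat) \<Rightarrow> (nat \<Rightarrow> nat \<Rightarrow> 'a \<Rightarrow> ennreal) \<Rightarrow> bool" where
  "asym_eprocess M Ps F r E \<longleftrightarrow> adapted_seq F E \<and>
     (\<forall>\<tau>\<in>STseq M Ps F r.
        limsup (\<lambda>m. SUP P\<in>Ps. \<integral>\<^sup>+ \<omega>. stopped E m (\<tau> m) \<omega> \<partial>P) \<le> 1)"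

end

theory Submission
  imports Defs
begin

definition ustep :: "real \<Rightarrow> real \<Rightarrow> bool \<times> nat \<Rightarrow> ennreal \<Rightarrow> bool \<times> nat" where
  "ustep a b s v = (if fst s then (if ennreal b < v then (False, Suc (snd s)) else (True, snd s))
                    else (if v < ennreal a then (True, snd s) else (False, snd s)))"

primrec ust :: "real \<Rightarrow> real \<Rightarrow> (nat \<Rightarrow> ennreal) \<Rightarrow> nat \<Rightarrow> bool \<times> nat" where
  "ust a b x 0 = (False, 0)"
| "ust a b x (Suc n) = ustep a b (ust a b x n) (x n)"

lemma ust_pathwise_real:
  fixes a b :: real and y :: "nat \<Rightarrow> real"
  assumes ab: "0 \<le> a" "a < b" and y: "\<And>k. 0 \<le> y k"
  defines "x \<equiv> \<lambda>k. ennreal (y k)"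
  shows "(if fst (ust a b x (Suc n))
          then (b - a) * snd (ust a b x (Suc n)) \<le> (\<Sum>k<n. (if fst (ust a b x (Suc k)) then y (Suc k) - y k else 0)) + a - y n
          else (b - a) * snd (ust a b x (Suc n)) \<le> (\<Sum>k<n. (if fst (ust a b x (Suc k)) then y (Suc k) - y k else 0)))"
proof (induction n)
  case 0
  then show ?case using ab y by (auto simp: ustep_def x_def ennreal_less_iff)
next
  case (Suc n)
  let ?G = "\<Sum>k<n. (if fst (ust a b x (Suc k)) then y (Suc k) - y k else 0)"
  show ?case
  proof (cases "fst (ust a b x (Suc n))")
    case True
    with Suc have IH: "(b - a) * snd (ust a b x (Suc n)) \<le> ?G + a - y n" by simp
    show ?thesis
    proof (cases "b < y (Suc n)")
      case True
      then have "ennreal b < x (Suc n)" using y ab unfolding x_def by (simp add: ennreal_less_iff)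
      then show ?thesis using IH \<open>fst (ust a b x (Suc n))\<close> True
        by (simp add: ustep_def algebra_simps)
    next
      case False
      then have "\<not> ennreal b < x (Suc n)" using y ab unfolding x_def by (simp add: ennreal_less_iff)
      then show ?thesis using IH \<open>fst (ust a b x (Suc n))\<close> False
        by (simp add: ustep_def algebra_simps)
    qed
  next
    case False
    with Suc have IH: "(b - a) * snd (ust a b x (Suc n)) \<le> ?G" by simp
    show ?thesis
    proof (cases "y (Suc n) < a")
      case True
      then have "x (Suc n) < ennreal a" using y ab unfolding x_def by (simp add: ennreal_less_iff)
      then show ?thesis using IH \<open>\<not> fst (ust a b x (Suc n))\<close> True
        by (simp add: ustep_def algebra_simps)
    next
      case F2: False
      then have "\<not> x (Suc n) < ennreal a" using y ab unfolding x_def by (simp add: ennreal_less_iff)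
      then show ?thesis using IH \<open>\<not> fst (ust a b x (Suc n))\<close> F2
        by (simp add: ustep_def algebra_simps)
    qed
  qed
qed

lemma ust_pathwise:
  fixes a b :: real and x :: "nat \<Rightarrow> ennreal"
  assumes ab: "0 \<le> a" "a < b" and fin: "\<And>k. x k < \<infinity>"
  shows "ennreal (b - a) * of_nat (snd (ust a b x (Suc n)))
         + (\<Sum>k<n. (if fst (ust a b x (Suc k)) then x k else 0))
       \<le> ennreal a + (\<Sum>k<n. (if fst (ust a b x (Suc k)) then x (Suc k) else 0))"
proof -
  define y where "y k = enn2real (x k)" for k
  have y0: "0 \<le> y k" for k by (simp add: y_def)
  have xy: "x = (\<lambda>k. ennreal (y k))" using fin by (auto simp: y_def fun_eq_iff)
  let ?h = "\<lambda>k. fst (ust a b x (Suc k))"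
  have inst: "if ?h n
          then (b - a) * snd (ust a b x (Suc n)) \<le> (\<Sum>k<n. (if ?h k then y (Suc k) - y k else 0)) + a - y n
          else (b - a) * snd (ust a b x (Suc n)) \<le> (\<Sum>k<n. (if ?h k then y (Suc k) - y k else 0))"
    using ust_pathwise_real[of a b y n] ab y0 unfolding xy[symmetric] by blast
  have main: "(b - a) * snd (ust a b x (Suc n)) \<le> (\<Sum>k<n. (if ?h k then y (Suc k) - y k else 0)) + a"
    using inst y0[of n] ab by (smt (verit))
  have s: "(\<Sum>k<n. (if ?h k then y (Suc k) - y k else 0))
      = (\<Sum>k<n. (if ?h k then y (Suc k) else 0)) - (\<Sum>k<n. (if ?h k then y k else 0))"
    by (simp add: sum_subtractf[symmetric] if_distrib cong: if_cong)
  have r: "(b - a) * snd (ust a b x (Suc n)) + (\<Sum>k<n. (if ?h k then y k else 0))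
      \<le> a + (\<Sum>k<n. (if ?h k then y (Suc k) else 0))"
    using main s by linarith
  have "ennreal (b - a) * of_nat (snd (ust a b x (Suc n))) + (\<Sum>k<n. (if ?h k then x k else 0))
      = ennreal ((b - a) * snd (ust a b x (Suc n)) + (\<Sum>k<n. (if ?h k then y k else 0)))"
    using ab y0 by (simp add: xy ennreal_plus ennreal_mult sum_nonneg if_distrib[of ennreal] cong: if_cong
        flip: sum_ennreal ennreal_of_nat_eq_real_of_nat)
  also have "\<dots> \<le> ennreal (a + (\<Sum>k<n. (if ?h k then y (Suc k) else 0)))"
    using r by (rule ennreal_leI)
  also have "\<dots> = ennreal a + (\<Sum>k<n. (if ?h k then x (Suc k) else 0))"
    using ab y0 by (simp add: xy ennreal_plus sum_nonneg if_distrib[of ennreal] cong: if_cong flip: sum_ennreal)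
  finally show ?thesis .
qed

lemma ust_snd_mono: "snd (ust a b x n) \<le> snd (ust a b x (Suc n))"
  by (simp add: ustep_def)

lemma ust_snd_mono_le: "m \<le> n \<Longrightarrow> snd (ust a b x m) \<le> snd (ust a b x n)"
proof (induction n rule: dec_induct)
  case (step n)
  then show ?case using ust_snd_mono[of a b x n] by linarith
qed simp

lemma ust_hold:
  assumes "fst (ust a b x j)" "j \<le> j'"
  shows "snd (ust a b x j) < snd (ust a b x j') \<or> (fst (ust a b x j') \<and> snd (ust a b x j') = snd (ust a b x j))"
  using assms(2)
proof (induction j' rule: dec_induct)
  case base then show ?case using assms by simp
next
  case (step n)
  obtain h u where hu: "ust a b x n = (h, u)" by (cases "ust a b x n")
  have m: "snd (ust a b x n) \<le> snd (ust a b x (Suc n))" by (rule ust_snd_mono)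
  from step.IH show ?case
  proof
    assume "snd (ust a b x j) < snd (ust a b x n)"
    then show ?case using m by simp
  next
    assume "fst (ust a b x n) \<and> snd (ust a b x n) = snd (ust a b x j)"
    then show ?case using hu by (cases "ennreal b < x n") (simp_all add: ustep_def)
  qed
qed

lemma ust_increase:
  assumes fa: "\<forall>m. \<exists>n\<ge>m. x n < ennreal a" and fb: "\<forall>m. \<exists>n\<ge>m. ennreal b < x n"
    and ab: "a < b" and a0: "0 \<le> a"
  shows "\<exists>n'. snd (ust a b x n) < snd (ust a b x n')"
proof -
  obtain n1 where n1: "n1 \<ge> n" "x n1 < ennreal a" using fa by blast
  have nb: "\<not> ennreal b < x n1"
  proof
    assume "ennreal b < x n1"
    with n1 have "ennreal b < ennreal a" by simp
    then show False using ab a0 by (simp add: ennreal_less_iff)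
  qed
  have h1: "fst (ust a b x (Suc n1))" "snd (ust a b x (Suc n1)) = snd (ust a b x n1)"
    using n1 nb by (auto simp: ustep_def)
  obtain n2 where n2: "n2 \<ge> Suc n1" "ennreal b < x n2" using fb by blast
  have "snd (ust a b x n) \<le> snd (ust a b x (Suc n1))"
    using ust_snd_mono_le[of n "Suc n1"] n1 by simp
  moreover have "snd (ust a b x (Suc n1)) < snd (ust a b x (Suc n2))"
  proof -
    from ust_hold[OF h1(1) n2(1)]
    show ?thesis
    proof
      assume "snd (ust a b x (Suc n1)) < snd (ust a b x n2)"
      then show ?thesis using ust_snd_mono[of a b x n2] by simp
    next
      assume "fst (ust a b x n2) \<and> snd (ust a b x n2) = snd (ust a b x (Suc n1))"
      then show ?thesis using n2 by (simp add: ustep_def)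
    qed
  qed
  ultimately show ?thesis by (intro exI[of _ "Suc n2"]) simp
qed

lemma ust_unbounded:
  assumes fa: "\<forall>m. \<exists>n\<ge>m. x n < ennreal a" and fb: "\<forall>m. \<exists>n\<ge>m. ennreal b < x n"
    and ab: "a < b" and a0: "0 \<le> a"
  shows "\<exists>n. K \<le> snd (ust a b x n)"
proof (induction K)
  case 0 then show ?case by simp
next
  case (Suc K)
  then obtain n where "K \<le> snd (ust a b x n)" by blast
  moreover obtain n' where "snd (ust a b x n) < snd (ust a b x n')"
    using ust_increase[OF fa fb ab a0] by blast
  ultimately show ?case by (intro exI[of _ n']) simp
qed

lemma ust_SUP_top:
  assumes "liminf x < ennreal a" "ennreal b < limsup x" "a < b" "0 \<le> a"
  shows "(SUP n. (of_nat (snd (ust a b x n)) :: ennreal)) = \<infinity>"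
proof -
  have fa: "\<forall>m. \<exists>n\<ge>m. x n < ennreal a"
  proof (rule ccontr)
    assume "\<not> ?thesis"
    then obtain m where "\<forall>n\<ge>m. ennreal a \<le> x n" by (auto simp: not_less)
    then have "ennreal a \<le> liminf x"
      by (intro Liminf_bounded) (auto simp: eventually_sequentially)
    then show False using assms by simp
  qed
  have fb: "\<forall>m. \<exists>n\<ge>m. ennreal b < x n"
  proof (rule ccontr)
    assume "\<not> ?thesis"
    then obtain m where "\<forall>n\<ge>m. x n \<le> ennreal b" by (auto simp: not_less)
    then have "limsup x \<le> ennreal b"
      by (intro Limsup_bounded) (auto simp: eventually_sequentially)
    then show False using assms by simp
  qed
  show ?thesis
  proof (rule ccontr)
    assume ne: "(SUP n. (of_nat (snd (ust a b x n)) :: ennreal)) \<noteq> \<infinity>"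
    have lt: "(SUP n. (of_nat (snd (ust a b x n)) :: ennreal)) < top" using ne by (simp only: less_top[symmetric]) simp
    obtain K where K: "(SUP n. (of_nat (snd (ust a b x n)) :: ennreal)) < of_nat K"
      using ennreal_Ex_less_of_nat[OF lt] by blast
    obtain n where "K \<le> snd (ust a b x n)" using ust_unbounded[OF fa fb assms(3,4)] by blast
    then have "(of_nat K :: ennreal) \<le> (SUP n. (of_nat (snd (ust a b x n)) :: ennreal))"
      by (intro SUP_upper2[of n]) auto
    then show False using K by simp
  qed
qed


locale wsm =
  fixes P :: "'a measure" and G :: "nat \<Rightarrow> 'a measure" and Z :: "nat \<Rightarrow> 'a \<Rightarrow> ennreal"
  assumes prob: "prob_space P"
    and sub: "\<And>n. subalgebra P (G n)"
    and incr: "\<And>n. sets (G n) \<subseteq> sets (G (Suc n))"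
    and adapted: "\<And>n. Z n \<in> borel_measurable (G n)"
    and super: "\<And>n A. A \<in> sets (G n) \<Longrightarrow> (\<integral>\<^sup>+x\<in>A. Z (Suc n) x \<partial>P) \<le> (\<integral>\<^sup>+x\<in>A. Z n x \<partial>P)"
    and fin0: "(\<integral>\<^sup>+x. Z 0 x \<partial>P) < \<infinity>"
begin

lemma Zmeas[measurable]: "Z n \<in> borel_measurable P"
  using measurable_from_subalg[OF sub adapted] .

lemma space_G: "space (G n) = space P" using sub[of n] by (simp add: subalgebra_def)

lemma incr_le: "m \<le> n \<Longrightarrow> sets (G m) \<subseteq> sets (G n)"
proof (induction n rule: dec_induct)
  case (step n) then show ?case using incr[of n] by blast
qed simp

lemma sub_le: "m \<le> n \<Longrightarrow> subalgebra (G n) (G m)"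
  unfolding subalgebra_def using space_G incr_le by auto

lemma int_le: "(\<integral>\<^sup>+x. Z n x \<partial>P) \<le> (\<integral>\<^sup>+x. Z 0 x \<partial>P)"
proof (induction n)
  case (Suc n)
  have sp: "space P \<in> sets (G n)" using sets.top[of "G n"] space_G by simp
  have "(\<integral>\<^sup>+x. Z (Suc n) x \<partial>P) = (\<integral>\<^sup>+x\<in>space P. Z (Suc n) x \<partial>P)"
    by (rule nn_integral_cong) simp
  also have "\<dots> \<le> (\<integral>\<^sup>+x\<in>space P. Z n x \<partial>P)" by (rule super[OF sp])
  also have "\<dots> = (\<integral>\<^sup>+x. Z n x \<partial>P)" by (rule nn_integral_cong) simp
  finally show ?case using Suc by simp
qed simp

lemma int_fin: "(\<integral>\<^sup>+x. Z n x \<partial>P) < \<infinity>"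
  using int_le[of n] fin0 by simp

lemma AE_fin: "AE \<omega> in P. \<forall>k. Z k \<omega> < \<infinity>"
proof -
  have "AE \<omega> in P. Z k \<omega> \<noteq> \<infinity>" for k
    by (rule nn_integral_PInf_AE) (use int_fin[of k] in auto)
  then show ?thesis by (simp add: AE_all_countable less_top)
qed

lemma ust_meas: "(\<lambda>\<omega>. ust a b (\<lambda>k. Z k \<omega>) (Suc n)) \<in> measurable (G n) (count_space UNIV)"
proof (induction n)
  case 0
  have [measurable]: "Z 0 \<in> borel_measurable (G 0)" by (rule adapted)
  show ?case by (simp add: ustep_def)
next
  case (Suc n)
  have [measurable]: "Z (Suc n) \<in> borel_measurable (G (Suc n))" by (rule adapted)
  have g: "(\<lambda>\<omega>. ust a b (\<lambda>k. Z k \<omega>) (Suc n)) \<in> measurable (G (Suc n)) (count_space UNIV)"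
    by (rule measurable_from_subalg[OF sub_le Suc]) simp
  have f: "(\<lambda>\<omega>. ustep a b s (Z (Suc n) \<omega>)) \<in> measurable (G (Suc n)) (count_space UNIV)" for s
    by (cases "fst s") (simp_all add: ustep_def)
  show ?case
    using measurable_compose_countable[where f="\<lambda>s \<omega>. ustep a b s (Z (Suc n) \<omega>)", OF f g] by simp
qed

lemma ust_measP: "(\<lambda>\<omega>. ust a b (\<lambda>k. Z k \<omega>) (Suc n)) \<in> measurable P (count_space UNIV)"
  by (rule measurable_from_subalg[OF sub ust_meas])

lemma U_meas[measurable]: "(\<lambda>\<omega>. (of_nat (snd (ust a b (\<lambda>k. Z k \<omega>) (Suc n))) :: ennreal)) \<in> borel_measurable P"
  using measurable_compose[OF ust_measP, of "\<lambda>s. (of_nat (snd s) :: ennreal)"] by simp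

lemma H_sets: "{\<omega> \<in> space P. fst (ust a b (\<lambda>k. Z k \<omega>) (Suc n))} \<in> sets (G n)"
proof -
  have "(\<lambda>\<omega>. ust a b (\<lambda>k. Z k \<omega>) (Suc n)) -` {s. fst s} \<inter> space (G n) \<in> sets (G n)"
    by (rule measurable_sets[OF ust_meas]) simp
  moreover have "(\<lambda>\<omega>. ust a b (\<lambda>k. Z k \<omega>) (Suc n)) -` {s. fst s} \<inter> space (G n)
      = {\<omega> \<in> space P. fst (ust a b (\<lambda>k. Z k \<omega>) (Suc n))}" using space_G by auto
  ultimately show ?thesis by simp
qed

lemma pred_h[measurable]: "Measurable.pred P (\<lambda>\<omega>. fst (ust a b (\<lambda>k. Z k \<omega>) (Suc n)))"
  unfolding pred_def using H_sets sub[of n] by (auto simp: subalgebra_def)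

end


context wsm
begin

lemma upcross_bound:
  assumes ab: "0 \<le> a" "a < b"
  shows "ennreal (b - a) * (\<integral>\<^sup>+\<omega>. of_nat (snd (ust a b (\<lambda>k. Z k \<omega>) (Suc n))) \<partial>P) \<le> ennreal a"
proof -
  let ?h = "\<lambda>k \<omega>. fst (ust a b (\<lambda>k. Z k \<omega>) (Suc k))"
  let ?U = "\<lambda>\<omega>. (of_nat (snd (ust a b (\<lambda>k. Z k \<omega>) (Suc n))) :: ennreal)"
  define I1 where "I1 k = (\<integral>\<^sup>+\<omega>. (if ?h k \<omega> then Z k \<omega> else 0) \<partial>P)" for k
  define I2 where "I2 k = (\<integral>\<^sup>+\<omega>. (if ?h k \<omega> then Z (Suc k) \<omega> else 0) \<partial>P)" for k
  interpret prob_space P by (rule prob)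
  have AEi: "AE \<omega> in P. ennreal (b - a) * ?U \<omega> + (\<Sum>k<n. (if ?h k \<omega> then Z k \<omega> else 0))
       \<le> ennreal a + (\<Sum>k<n. (if ?h k \<omega> then Z (Suc k) \<omega> else 0))"
    using AE_fin by eventually_elim (rule ust_pathwise[OF ab], auto)
  have "ennreal (b - a) * integral\<^sup>N P ?U + (\<Sum>k<n. I1 k)
      = (\<integral>\<^sup>+\<omega>. ennreal (b - a) * ?U \<omega> + (\<Sum>k<n. (if ?h k \<omega> then Z k \<omega> else 0)) \<partial>P)"
  proof -
    have m1: "(\<lambda>\<omega>. ennreal (b - a) * ?U \<omega>) \<in> borel_measurable P" by measurable
    have m2: "(\<lambda>\<omega>. (if ?h k \<omega> then Z k \<omega> else 0)) \<in> borel_measurable P" for k by measurable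
    show ?thesis unfolding I1_def
      by (simp only: nn_integral_add[OF m1 borel_measurable_sum[OF m2]] nn_integral_cmult[OF U_meas]
          nn_integral_sum[OF m2])
  qed
  also have "\<dots> \<le> (\<integral>\<^sup>+\<omega>. ennreal a + (\<Sum>k<n. (if ?h k \<omega> then Z (Suc k) \<omega> else 0)) \<partial>P)"
    by (rule nn_integral_mono_AE[OF AEi])
  also have "\<dots> = ennreal a + (\<Sum>k<n. I2 k)"
  proof -
    have m2: "(\<lambda>\<omega>. (if ?h k \<omega> then Z (Suc k) \<omega> else 0)) \<in> borel_measurable P" for k by measurable
    have "(\<integral>\<^sup>+\<omega>. ennreal a + (\<Sum>k<n. (if ?h k \<omega> then Z (Suc k) \<omega> else 0)) \<partial>P)
       = (\<integral>\<^sup>+\<omega>. ennreal a \<partial>P) + (\<integral>\<^sup>+\<omega>. (\<Sum>k<n. (if ?h k \<omega> then Z (Suc k) \<omega> else 0)) \<partial>P)"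
      by (rule nn_integral_add[OF measurable_const borel_measurable_sum[OF m2]]) simp
    also have "\<dots> = ennreal a + (\<Sum>k<n. I2 k)"
      unfolding I2_def nn_integral_sum[OF m2] by (simp add: emeasure_space_1)
    finally show ?thesis .
  qed
  also have "\<dots> \<le> ennreal a + (\<Sum>k<n. I1 k)"
  proof -
    have "I2 k \<le> I1 k" for k
    proof -
      have A: "{\<omega> \<in> space P. ?h k \<omega>} \<in> sets (G k)" by (rule H_sets)
      have "I2 k = (\<integral>\<^sup>+x\<in>{\<omega> \<in> space P. ?h k \<omega>}. Z (Suc k) x \<partial>P)"
        unfolding I2_def by (rule nn_integral_cong) (simp add: indicator_def)
      also have "\<dots> \<le> (\<integral>\<^sup>+x\<in>{\<omega> \<in> space P. ?h k \<omega>}. Z k x \<partial>P)" by (rule super[OF A])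
      also have "\<dots> = I1 k"
        unfolding I1_def by (rule nn_integral_cong) (simp add: indicator_def)
      finally show ?thesis .
    qed
    then show ?thesis by (intro add_left_mono sum_mono) auto
  qed
  finally have le: "ennreal (b - a) * integral\<^sup>N P ?U + (\<Sum>k<n. I1 k) \<le> ennreal a + (\<Sum>k<n. I1 k)" .
  have "I1 k < \<infinity>" for k
  proof -
    have "I1 k \<le> (\<integral>\<^sup>+\<omega>. Z k \<omega> \<partial>P)" unfolding I1_def by (rule nn_integral_mono) simp
    then show ?thesis using int_fin[of k] by simp
  qed
  then have "(\<Sum>k<n. I1 k) \<noteq> \<infinity>" by (simp add: less_top[symmetric])
  then show ?thesis using le by (simp add: add.commute[of _ "\<Sum>k<n. I1 k"] ennreal_add_left_cancel_le)
qed

lemma AE_finite_upcross: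
  assumes ab: "0 \<le> a" "a < b"
  shows "AE \<omega> in P. (SUP n. (of_nat (snd (ust a b (\<lambda>k. Z k \<omega>) (Suc n))) :: ennreal)) \<noteq> \<infinity>"
proof (rule nn_integral_PInf_AE)
  show "(\<lambda>\<omega>. SUP n. (of_nat (snd (ust a b (\<lambda>k. Z k \<omega>) (Suc n))) :: ennreal)) \<in> borel_measurable P"
    apply (rule borel_measurable_SUP)
     apply simp
    apply (rule U_meas)
    done
  have inc: "incseq (\<lambda>n \<omega>. (of_nat (snd (ust a b (\<lambda>k. Z k \<omega>) (Suc n))) :: ennreal))"
    by (rule incseq_SucI) (auto simp: le_fun_def simp del: ust.simps intro: ust_snd_mono)
  have eq: "(\<integral>\<^sup>+\<omega>. (SUP n. (of_nat (snd (ust a b (\<lambda>k. Z k \<omega>) (Suc n))) :: ennreal)) \<partial>P)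
      = (SUP n. \<integral>\<^sup>+\<omega>. (of_nat (snd (ust a b (\<lambda>k. Z k \<omega>) (Suc n))) :: ennreal) \<partial>P)"
    by (rule nn_integral_monotone_convergence_SUP[OF inc U_meas])
  have "ennreal (b - a) * (SUP n. \<integral>\<^sup>+\<omega>. (of_nat (snd (ust a b (\<lambda>k. Z k \<omega>) (Suc n))) :: ennreal) \<partial>P)
       = (SUP n. ennreal (b - a) * \<integral>\<^sup>+\<omega>. (of_nat (snd (ust a b (\<lambda>k. Z k \<omega>) (Suc n))) :: ennreal) \<partial>P)"
    by (rule SUP_mult_left_ennreal)
  also have "\<dots> \<le> ennreal a" by (rule SUP_least) (rule upcross_bound[OF ab])
  finally have le: "ennreal (b - a) * (SUP n. \<integral>\<^sup>+\<omega>. (of_nat (snd (ust a b (\<lambda>k. Z k \<omega>) (Suc n))) :: ennreal) \<partial>P) \<le> ennreal a" .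
  show "(\<integral>\<^sup>+\<omega>. (SUP n. (of_nat (snd (ust a b (\<lambda>k. Z k \<omega>) (Suc n))) :: ennreal)) \<partial>P) \<noteq> \<infinity>"
  proof
    assume "(\<integral>\<^sup>+\<omega>. (SUP n. (of_nat (snd (ust a b (\<lambda>k. Z k \<omega>) (Suc n))) :: ennreal)) \<partial>P) = \<infinity>"
    then have "ennreal (b - a) * \<infinity> \<le> ennreal a" using le eq by simp
    then show False using ab by (simp add: ennreal_mult_top top_unique)
  qed
qed

lemma AE_lim_eq: "AE \<omega> in P. liminf (\<lambda>n. Z n \<omega>) = limsup (\<lambda>n. Z n \<omega>)"
proof -
  have "AE \<omega> in P. \<forall>q::rat \<times> rat. 0 \<le> fst q \<and> fst q < snd q \<longrightarrow>
      (SUP n. (of_nat (snd (ust (real_of_rat (fst q)) (real_of_rat (snd q)) (\<lambda>k. Z k \<omega>) (Suc n))) :: ennreal)) \<noteq> \<infinity>"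
    unfolding AE_all_countable
  proof
    fix q :: "rat \<times> rat"
    show "AE \<omega> in P. 0 \<le> fst q \<and> fst q < snd q \<longrightarrow>
      (SUP n. (of_nat (snd (ust (real_of_rat (fst q)) (real_of_rat (snd q)) (\<lambda>k. Z k \<omega>) (Suc n))) :: ennreal)) \<noteq> \<infinity>"
    proof (cases "0 \<le> fst q \<and> fst q < snd q")
      case True
      then have "0 \<le> real_of_rat (fst q)" "real_of_rat (fst q) < real_of_rat (snd q)"
        by (simp_all add: of_rat_less)
      from AE_finite_upcross[OF this] show ?thesis by (rule AE_mp) (intro AE_I2 impI, simp)
    next
      case False
      then show ?thesis by (intro AE_I2 impI) blast
    qed
  qed
  then show ?thesis
  proof (rule AE_mp, intro AE_I2 impI)
    fix \<omega>
    assume H: "\<forall>q::rat \<times> rat. 0 \<le> fst q \<and> fst q < snd q \<longrightarrow>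
      (SUP n. (of_nat (snd (ust (real_of_rat (fst q)) (real_of_rat (snd q)) (\<lambda>k. Z k \<omega>) (Suc n))) :: ennreal)) \<noteq> \<infinity>"
    let ?x = "\<lambda>n. Z n \<omega>"
    have le: "liminf ?x \<le> limsup ?x" by (rule Liminf_le_Limsup) simp
    show "liminf ?x = limsup ?x"
    proof (rule ccontr)
      assume "liminf ?x \<noteq> limsup ?x"
      with le have lt: "liminf ?x < limsup ?x" by simp
      obtain q1 :: rat where q1: "liminf ?x < ennreal (real_of_rat q1)" "ennreal (real_of_rat q1) < limsup ?x"
        using ennreal_rat_dense[OF lt] by blast
      obtain q2 :: rat where q2: "ennreal (real_of_rat q1) < ennreal (real_of_rat q2)" "ennreal (real_of_rat q2) < limsup ?x"
        using ennreal_rat_dense[OF q1(2)] by blast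
      have "(0::ennreal) < ennreal (real_of_rat q1)" using q1(1) by (rule le_less_trans[OF zero_le])
      then have q1pos: "0 < real_of_rat q1" by simp
      have q12: "real_of_rat q1 < real_of_rat q2"
        using q2(1) q1pos by (simp add: ennreal_less_iff)
      then have "q1 < q2" by (simp add: of_rat_less)
      moreover have "0 \<le> q1" using q1pos by (simp add: zero_less_of_rat_iff less_imp_le)
      ultimately have ne: "(SUP n. (of_nat (snd (ust (real_of_rat q1) (real_of_rat q2) ?x (Suc n))) :: ennreal)) \<noteq> \<infinity>"
        using H[rule_format, of "(q1, q2)"] by simp
      have top: "(SUP n. (of_nat (snd (ust (real_of_rat q1) (real_of_rat q2) ?x n)) :: ennreal)) = \<infinity>"
        by (rule ust_SUP_top[OF q1(1) q2(2) q12]) (use q1pos in simp)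
      have "(SUP n. (of_nat (snd (ust (real_of_rat q1) (real_of_rat q2) ?x n)) :: ennreal))
          \<le> (SUP n. (of_nat (snd (ust (real_of_rat q1) (real_of_rat q2) ?x (Suc n))) :: ennreal))"
      proof (rule SUP_mono)
        fix n
        show "\<exists>m\<in>UNIV. (of_nat (snd (ust (real_of_rat q1) (real_of_rat q2) ?x n)) :: ennreal)
            \<le> of_nat (snd (ust (real_of_rat q1) (real_of_rat q2) ?x (Suc m)))"
          by (rule bexI[of _ n]) (rule of_nat_mono[OF ust_snd_mono], rule UNIV_I)
      qed
      then show False using ne top by (simp add: top_unique del: ust.simps)
    qed
  qed
qed

theorem limsup_int: "(\<integral>\<^sup>+\<omega>. limsup (\<lambda>n. Z n \<omega>) \<partial>P) \<le> (\<integral>\<^sup>+\<omega>. Z 0 \<omega> \<partial>P)"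
proof -
  have "(\<integral>\<^sup>+\<omega>. limsup (\<lambda>n. Z n \<omega>) \<partial>P) = (\<integral>\<^sup>+\<omega>. liminf (\<lambda>n. Z n \<omega>) \<partial>P)"
    by (rule nn_integral_cong_AE) (use AE_lim_eq in \<open>auto elim: AE_mp\<close>)
  also have "\<dots> \<le> liminf (\<lambda>n. \<integral>\<^sup>+\<omega>. Z n \<omega> \<partial>P)"
    by (rule nn_integral_liminf) simp
  also have "\<dots> \<le> (\<integral>\<^sup>+\<omega>. Z 0 \<omega> \<partial>P)"
    by (intro Liminf_le) (auto intro!: always_eventually int_le)
  finally show ?thesis .
qed

end


locale filt =
  fixes P :: "'a measure" and G :: "nat \<Rightarrow> 'a measure"
  assumes prob: "prob_space P"
    and sub: "\<And>n. subalgebra P (G n)"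
    and incr: "\<And>n. sets (G n) \<subseteq> sets (G (Suc n))"
begin

lemma space_G: "space (G n) = space P" using sub[of n] by (simp add: subalgebra_def)

lemma sets_G: "A \<in> sets (G n) \<Longrightarrow> A \<in> sets P" using sub[of n] by (auto simp: subalgebra_def)

lemma incr_le: "m \<le> n \<Longrightarrow> sets (G m) \<subseteq> sets (G n)"
proof (induction n rule: dec_induct)
  case (step n) then show ?case using incr[of n] by blast
qed simp

lemma sub_le: "m \<le> n \<Longrightarrow> subalgebra (G n) (G m)"
  unfolding subalgebra_def using space_G incr_le by auto

lemma meas_le: "m \<le> n \<Longrightarrow> f \<in> measurable (G m) N \<Longrightarrow> f \<in> measurable (G n) N"
  by (rule measurable_from_subalg[OF sub_le])

lemma measP: "f \<in> measurable (G m) N \<Longrightarrow> f \<in> measurable P N"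
  by (rule measurable_from_subalg[OF sub])

lemma sfs: "sigma_finite_subalgebra P (G n)"
proof -
  interpret prob_space P by (rule prob)
  have "finite_measure_subalgebra P (G n)"
    by unfold_locales (rule sub)
  then show ?thesis by (rule finite_measure_subalgebra_is_sigma_finite)
qed

lemma ce_intg:
  assumes "f \<in> borel_measurable (G n)" "g \<in> borel_measurable P"
  shows "(\<integral>\<^sup>+ x. f x * nn_cond_exp P (G n) g x \<partial>P) = (\<integral>\<^sup>+ x. f x * g x \<partial>P)"
  by (rule sigma_finite_subalgebra.nn_cond_exp_intg[OF sfs assms])

end

primrec stopz :: "(nat \<Rightarrow> 'a \<Rightarrow> ennreal) \<Rightarrow> ('a \<Rightarrow> enat) \<Rightarrow> nat \<Rightarrow> 'a \<Rightarrow> ennreal" where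
  "stopz L \<tau> 0 = L 0"
| "stopz L \<tau> (Suc n) = (\<lambda>\<omega>. if \<tau> \<omega> \<le> enat n then stopz L \<tau> n \<omega> else L (Suc n) \<omega>)"

lemma stopz_before:
  assumes "\<not> \<tau> \<omega> \<le> enat n" shows "stopz L \<tau> n \<omega> = L n \<omega>"
proof (cases n)
  case (Suc k)
  have kn: "enat k \<le> enat n" using Suc by simp
  have "\<not> \<tau> \<omega> \<le> enat k"
  proof
    assume "\<tau> \<omega> \<le> enat k"
    then have "\<tau> \<omega> \<le> enat n" using kn by (rule order_trans)
    then show False using assms by simp
  qed
  then show ?thesis using Suc by simp
qed simp

lemma stopz_after: "\<tau> \<omega> = enat j \<Longrightarrow> j \<le> n \<Longrightarrow> stopz L \<tau> n \<omega> = L j \<omega>"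
proof (induction n)
  case 0 then show ?case by simp
next
  case (Suc n)
  show ?case
  proof (cases "j \<le> n")
    case True then show ?thesis using Suc by simp
  next
    case False then have "j = Suc n" using Suc by simp
    then show ?thesis using Suc by simp
  qed
qed

lemma stopz_inf: "\<tau> \<omega> = \<infinity> \<Longrightarrow> stopz L \<tau> n \<omega> = L n \<omega>"
  by (rule stopz_before) simp

context filt
begin

lemma optional_stopping:
  fixes L X :: "nat \<Rightarrow> 'a \<Rightarrow> ennreal" and \<tau> :: "'a \<Rightarrow> enat" and r :: enat
  assumes Lmeas: "\<And>n. L n \<in> borel_measurable (G n)"
    and XL: "\<And>n. AE \<omega> in P. X n \<omega> \<le> L n \<omega>"
    and st: "\<And>n. {\<omega> \<in> space P. \<tau> \<omega> \<le> enat n} \<in> sets (G n)"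
    and tr: "AE \<omega> in P. \<tau> \<omega> \<le> r"
    and fin: "(\<integral>\<^sup>+\<omega>. L 0 \<omega> \<partial>P) < \<infinity>"
    and sup: "\<And>n. enat (n + 1) \<le> r \<Longrightarrow> AE \<omega> in P. nn_cond_exp P (G n) (L (n + 1)) \<omega> \<le> L n \<omega>"
  shows "(\<integral>\<^sup>+\<omega>. (case \<tau> \<omega> of enat n \<Rightarrow> X n \<omega> | \<infinity> \<Rightarrow> limsup (\<lambda>n. X n \<omega>)) \<partial>P)
         \<le> (\<integral>\<^sup>+\<omega>. L 0 \<omega> \<partial>P)"
proof -
  interpret prob_space P by (rule prob)
  have LmeasP[measurable]: "L n \<in> borel_measurable P" for n by (rule measP[OF Lmeas])
  have pred_t: "Measurable.pred (G n) (\<lambda>\<omega>. \<tau> \<omega> \<le> enat n)" for n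
    unfolding pred_def using st[of n] space_G[of n] by simp
  have pred_tm: "m \<le> n \<Longrightarrow> Measurable.pred (G n) (\<lambda>\<omega>. \<tau> \<omega> \<le> enat m)" for m n
    using pred_t[of m] incr_le[of m n] unfolding pred_def space_G by auto
  have predP[measurable]: "Measurable.pred P (\<lambda>\<omega>. \<tau> \<omega> \<le> enat n)" for n
    using st[of n] sets_G unfolding pred_def by blast
  define Z where "Z = stopz L \<tau>"
  have Zmeas: "Z n \<in> borel_measurable (G n)" for n
  proof (induction n)
    case 0 then show ?case by (simp add: Z_def Lmeas)
  next
    case (Suc n)
    have [measurable]: "Z n \<in> borel_measurable (G (Suc n))" by (rule meas_le[OF _ Suc]) simp
    have [measurable]: "L (Suc n) \<in> borel_measurable (G (Suc n))" by (rule Lmeas)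
    have [measurable]: "Measurable.pred (G (Suc n)) (\<lambda>\<omega>. \<tau> \<omega> \<le> enat n)" by (rule pred_tm) simp
    have "Z (Suc n) = (\<lambda>\<omega>. if \<tau> \<omega> \<le> enat n then Z n \<omega> else L (Suc n) \<omega>)" by (simp only: Z_def stopz.simps)
    also have "\<dots> \<in> borel_measurable (G (Suc n))" by measurable
    finally show ?case .
  qed
  have ZmeasP[measurable]: "Z n \<in> borel_measurable P" for n by (rule measP[OF Zmeas])
  have fin0: "(\<integral>\<^sup>+x. Z 0 x \<partial>P) < \<infinity>" using fin by (simp add: Z_def)
  have Wsup: "(\<integral>\<^sup>+x\<in>A. Z (Suc n) x \<partial>P) \<le> (\<integral>\<^sup>+x\<in>A. Z n x \<partial>P)" if A: "A \<in> sets (G n)" for n A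
  proof -
    define B where "B = A \<inter> {\<omega> \<in> space P. \<not> \<tau> \<omega> \<le> enat n}"
    have "B = A - {\<omega> \<in> space P. \<tau> \<omega> \<le> enat n}"
      using sets.sets_into_space[OF A] space_G[of n] by (auto simp: B_def)
    then have B: "B \<in> sets (G n)" using A st[of n] by simp
    have [measurable]: "A \<in> sets P" by (rule sets_G[OF A])
    have key: "(\<integral>\<^sup>+x. L (Suc n) x * indicator B x \<partial>P) \<le> (\<integral>\<^sup>+x. L n x * indicator B x \<partial>P)"
    proof (cases "enat (n + 1) \<le> r")
      case True
      have [measurable]: "indicator B \<in> borel_measurable (G n)" using B by simp
      have "(\<integral>\<^sup>+x. L (Suc n) x * indicator B x \<partial>P) = (\<integral>\<^sup>+x. indicator B x * L (n + 1) x \<partial>P)"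
        by (simp add: mult.commute)
      also have "\<dots> = (\<integral>\<^sup>+x. indicator B x * nn_cond_exp P (G n) (L (n + 1)) x \<partial>P)"
        by (rule ce_intg[symmetric]) simp_all
      also have "\<dots> \<le> (\<integral>\<^sup>+x. L n x * indicator B x \<partial>P)"
        proof (rule nn_integral_mono_AE)
        show "AE x in P. indicator B x * nn_cond_exp P (G n) (L (n + 1)) x \<le> L n x * indicator B x"
          using sup[OF True] by (rule AE_mp) (intro AE_I2 impI, simp add: indicator_def)
      qed
      finally show ?thesis .
    next
      case False
      have "AE x in P. L (Suc n) x * indicator B x = 0"
        using tr
      proof (rule AE_mp, intro AE_I2 impI)
        fix x assume "\<tau> x \<le> r"
        with False have "\<tau> x \<le> enat n"
          by (cases r; cases "\<tau> x") auto
        then show "L (Suc n) x * indicator B x = 0" by (simp add: B_def)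
      qed
      then have "(\<integral>\<^sup>+x. L (Suc n) x * indicator B x \<partial>P) = (\<integral>\<^sup>+x. 0 \<partial>P)"
        by (rule nn_integral_cong_AE)
      then show ?thesis by simp
    qed
    have e1: "Z (Suc n) x * indicator A x = Z n x * indicator (A - B) x + L (Suc n) x * indicator B x"
      if "x \<in> space P" for x
      using that by (cases "\<tau> x \<le> enat n") (simp_all add: Z_def B_def indicator_def)
    have e2: "Z n x * indicator A x = Z n x * indicator (A - B) x + L n x * indicator B x"
      if "x \<in> space P" for x
      using that by (cases "\<tau> x \<le> enat n") (simp_all add: Z_def B_def indicator_def stopz_before)
    have [measurable]: "B \<in> sets P" by (rule sets_G[OF B])
    have "(\<integral>\<^sup>+x\<in>A. Z (Suc n) x \<partial>P) = (\<integral>\<^sup>+x. Z n x * indicator (A - B) x \<partial>P) + (\<integral>\<^sup>+x. L (Suc n) x * indicator B x \<partial>P)"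
      by (subst nn_integral_add[symmetric]) (auto intro!: nn_integral_cong simp: e1)
    also have "\<dots> \<le> (\<integral>\<^sup>+x. Z n x * indicator (A - B) x \<partial>P) + (\<integral>\<^sup>+x. L n x * indicator B x \<partial>P)"
      using key by (rule add_left_mono)
    also have "\<dots> = (\<integral>\<^sup>+x\<in>A. Z n x \<partial>P)"
      by (subst nn_integral_add[symmetric]) (auto intro!: nn_integral_cong simp: e2)
    finally show ?thesis .
  qed
  interpret W: wsm P G Z by (rule wsm.intro[OF prob sub incr Zmeas Wsup fin0])
  have "AE \<omega> in P. \<forall>n. X n \<omega> \<le> L n \<omega>" using XL by (simp add: AE_all_countable)
  then have "AE \<omega> in P. (case \<tau> \<omega> of enat n \<Rightarrow> X n \<omega> | \<infinity> \<Rightarrow> limsup (\<lambda>n. X n \<omega>)) \<le> limsup (\<lambda>n. Z n \<omega>)"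
  proof (rule AE_mp, intro AE_I2 impI)
    fix \<omega> assume XL': "\<forall>n. X n \<omega> \<le> L n \<omega>"
    show "(case \<tau> \<omega> of enat n \<Rightarrow> X n \<omega> | \<infinity> \<Rightarrow> limsup (\<lambda>n. X n \<omega>)) \<le> limsup (\<lambda>n. Z n \<omega>)"
    proof (cases "\<tau> \<omega>")
      case (enat j)
      have "limsup (\<lambda>n. Z n \<omega>) = limsup (\<lambda>n. L j \<omega>)"
        unfolding Z_def by (rule Limsup_eq) (use stopz_after[of \<tau> \<omega> j _ L, OF enat] in \<open>auto simp: eventually_sequentially\<close>)
      then show ?thesis using enat XL' by (simp add: Limsup_const)
    next
      case infinity
      have "limsup (\<lambda>n. X n \<omega>) \<le> limsup (\<lambda>n. L n \<omega>)"
        by (rule Limsup_mono) (use XL' in auto)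
      also have "\<dots> = limsup (\<lambda>n. Z n \<omega>)" using infinity by (simp add: Z_def stopz_inf)
      finally show ?thesis using infinity by simp
    qed
  qed
  then have "(\<integral>\<^sup>+\<omega>. (case \<tau> \<omega> of enat n \<Rightarrow> X n \<omega> | \<infinity> \<Rightarrow> limsup (\<lambda>n. X n \<omega>)) \<partial>P)
      \<le> (\<integral>\<^sup>+\<omega>. limsup (\<lambda>n. Z n \<omega>) \<partial>P)" by (rule nn_integral_mono_AE)
  also have "\<dots> \<le> (\<integral>\<^sup>+\<omega>. Z 0 \<omega> \<partial>P)" by (rule W.limsup_int)
  finally show ?thesis by (simp add: Z_def)
qed

end


primrec sn :: "'a measure \<Rightarrow> (nat \<Rightarrow> 'a measure) \<Rightarrow> (nat \<Rightarrow> 'a \<Rightarrow> ennreal) \<Rightarrow> nat \<Rightarrow> nat \<Rightarrow> 'a \<Rightarrow> ennreal" where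
  "sn P G X N 0 = X N"
| "sn P G X N (Suc k) = (\<lambda>\<omega>. max (X (N - Suc k) \<omega>) (nn_cond_exp P (G (N - Suc k)) (sn P G X N k) \<omega>))"

definition snell :: "'a measure \<Rightarrow> (nat \<Rightarrow> 'a measure) \<Rightarrow> (nat \<Rightarrow> 'a \<Rightarrow> ennreal) \<Rightarrow> nat \<Rightarrow> nat \<Rightarrow> 'a \<Rightarrow> ennreal" where
  "snell P G X N n = (if n \<le> N then sn P G X N (N - n) else (\<lambda>_. 0))"

definition hcap :: "enat \<Rightarrow> nat \<Rightarrow> nat" where
  "hcap r N = (if enat N \<le> r then N else the_enat r)"

definition lsn :: "'a measure \<Rightarrow> (nat \<Rightarrow> 'a measure) \<Rightarrow> (nat \<Rightarrow> 'a \<Rightarrow> ennreal) \<Rightarrow> enat \<Rightarrow> nat \<Rightarrow> 'a \<Rightarrow> ennreal" where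
  "lsn P G X r n = (\<lambda>\<omega>. SUP N. snell P G X (hcap r N) n \<omega>)"

definition otq :: "'a measure \<Rightarrow> (nat \<Rightarrow> 'a measure) \<Rightarrow> (nat \<Rightarrow> 'a \<Rightarrow> ennreal) \<Rightarrow> nat \<Rightarrow> nat \<Rightarrow> 'a \<Rightarrow> bool" where
  "otq P G X h k \<omega> = (h \<le> k \<or> nn_cond_exp P (G k) (snell P G X h (Suc k)) \<omega> \<le> X k \<omega>)"

definition otau :: "'a measure \<Rightarrow> (nat \<Rightarrow> 'a measure) \<Rightarrow> (nat \<Rightarrow> 'a \<Rightarrow> ennreal) \<Rightarrow> nat \<Rightarrow> 'a \<Rightarrow> nat" where
  "otau P G X h \<omega> = (LEAST k. otq P G X h k \<omega>)"

lemma hcap_le: "enat (hcap r N) \<le> r"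
  by (cases r) (auto simp: hcap_def)

lemma hcap_id: "enat N \<le> r \<Longrightarrow> hcap r N = N"
  by (simp add: hcap_def)

lemma hcap_Suc: "hcap r (Suc N) = hcap r N \<or> hcap r (Suc N) = Suc (hcap r N)"
proof (cases r)
  case (enat R)
  then show ?thesis by (auto simp: hcap_def)
qed (simp add: hcap_def)

lemma snell_top: "snell P G X N N = X N"
  by (simp add: snell_def)

lemma snell_above: "N < n \<Longrightarrow> snell P G X N n = (\<lambda>_. 0)"
  by (simp add: snell_def)

lemma snell_below:
  assumes "n < N"
  shows "snell P G X N n = (\<lambda>\<omega>. max (X n \<omega>) (nn_cond_exp P (G n) (snell P G X N (Suc n)) \<omega>))"
proof -
  have e: "N - n = Suc (N - Suc n)" using assms by simp
  have e2: "N - Suc (N - Suc n) = n" using assms by simp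
  show ?thesis using assms unfolding snell_def by (simp add: e e2)
qed

locale snl = filt +
  fixes X :: "nat \<Rightarrow> 'a \<Rightarrow> ennreal"
  assumes Xmeas: "\<And>n. X n \<in> borel_measurable (G n)"
begin

lemma XmeasP[measurable]: "X n \<in> borel_measurable P" by (rule measP[OF Xmeas])

lemma snell_meas: "snell P G X N n \<in> borel_measurable (G n)"
proof (cases "n < N")
  case True
  have [measurable]: "X n \<in> borel_measurable (G n)" by (rule Xmeas)
  show ?thesis unfolding snell_below[OF True] by measurable
next
  case False
  then show ?thesis by (cases "n = N") (simp_all add: snell_top snell_above Xmeas)
qed

lemma snell_measP[measurable]: "snell P G X N n \<in> borel_measurable P"
  by (rule measP[OF snell_meas])

lemma ce_mono: "AE x in P. f x \<le> g x \<Longrightarrow> f \<in> borel_measurable P \<Longrightarrow> g \<in> borel_measurable P \<Longrightarrow>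
   AE x in P. nn_cond_exp P (G n) f x \<le> nn_cond_exp P (G n) g x"
  by (rule sigma_finite_subalgebra.nn_cond_exp_mono[OF sfs])

lemma ce_zero: "AE x in P. nn_cond_exp P (G n) (\<lambda>_. 0) x = 0"
proof -
  have "AE x in P. (\<lambda>_. 0::ennreal) x = nn_cond_exp P (G n) (\<lambda>_. 0) x"
    by (rule sigma_finite_subalgebra.nn_cond_exp_F_meas[OF sfs]) simp
  then show ?thesis by (rule AE_mp) auto
qed

lemma snell_mono_N: "AE x in P. snell P G X N n x \<le> snell P G X (Suc N) n x"
proof (cases "n \<le> N")
  case True
  have "AE x in P. snell P G X N (N - d) x \<le> snell P G X (Suc N) (N - d) x" if "d \<le> N" for d
    using that
  proof (induction d)
    case 0
    show ?case by (simp add: snell_top snell_below)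
  next
    case (Suc d)
    have lt: "N - Suc d < N" using Suc.prems by simp
    have lt2: "N - Suc d < Suc N" using Suc.prems by simp
    have sc: "Suc (N - Suc d) = N - d" using Suc.prems by simp
    have "AE x in P. nn_cond_exp P (G (N - Suc d)) (snell P G X N (N - d)) x
        \<le> nn_cond_exp P (G (N - Suc d)) (snell P G X (Suc N) (N - d)) x"
      using Suc.IH Suc.prems by (intro ce_mono) auto
    then show ?case
      unfolding snell_below[OF lt] snell_below[OF lt2] sc
      by (rule AE_mp) (auto intro!: AE_I2 simp: le_max_iff_disj)
  qed
  from this[of "N - n"] True show ?thesis by simp
next
  case False
  then show ?thesis by (simp add: snell_above)
qed

lemma snell_mono_hcap: "AE x in P. snell P G X (hcap r N) n x \<le> snell P G X (hcap r (Suc N)) n x"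
  using hcap_Suc[of r N] snell_mono_N[of "hcap r N" n] by auto

lemma snell_mono_hcap_AE: "AE x in P. \<forall>N. snell P G X (hcap r N) n x \<le> snell P G X (hcap r (Suc N)) n x"
  using snell_mono_hcap by (simp add: AE_all_countable)

lemma lsn_meas: "lsn P G X r n \<in> borel_measurable (G n)"
  unfolding lsn_def by (rule borel_measurable_SUP) (simp_all add: snell_meas)

lemma lsn_measP[measurable]: "lsn P G X r n \<in> borel_measurable P"
  by (rule measP[OF lsn_meas])

lemma lsn_ge: "enat n \<le> r \<Longrightarrow> X n \<omega> \<le> lsn P G X r n \<omega>"
  unfolding lsn_def by (rule SUP_upper2[of n]) (simp_all add: hcap_id snell_top)

end


context filt
begin

lemma ce_SUP:
  assumes meas: "\<And>N. f N \<in> borel_measurable P" and inc: "\<And>N. AE x in P. f N x \<le> f (Suc N) x"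
  shows "AE x in P. (SUP N. nn_cond_exp P (G n) (f N) x) = nn_cond_exp P (G n) (\<lambda>x. SUP N. f N x) x"
proof (rule sigma_finite_subalgebra.nn_cond_exp_charact[OF sfs])
  show "(\<lambda>x. SUP N. f N x) \<in> borel_measurable P" using meas by measurable
  show "(\<lambda>x. SUP N. nn_cond_exp P (G n) (f N) x) \<in> borel_measurable (G n)" by measurable
  fix A assume A: "A \<in> sets (G n)"
  have [measurable]: "A \<in> sets P" by (rule sets_G[OF A])
  have [measurable]: "indicator A \<in> borel_measurable (G n)" using A by simp
  have "(\<integral>\<^sup>+x\<in>A. (SUP N. f N x) \<partial>P) = (\<integral>\<^sup>+x. (SUP N. f N x * indicator A x) \<partial>P)"
    by (simp add: SUP_mult_right_ennreal)
  also have "\<dots> = (SUP N. \<integral>\<^sup>+x. f N x * indicator A x \<partial>P)"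
  proof (rule nn_integral_monotone_convergence_SUP_AE)
    show "AE x in P. f N x * indicator A x \<le> f (Suc N) x * indicator A x" for N
      using inc[of N] by (rule AE_mp) (auto intro!: AE_I2 mult_right_mono)
    show "(\<lambda>x. f N x * indicator A x) \<in> borel_measurable P" for N using meas[of N] by measurable
  qed
  also have "\<dots> = (SUP N. \<integral>\<^sup>+x. indicator A x * nn_cond_exp P (G n) (f N) x \<partial>P)"
    by (rule SUP_cong[OF refl]) (simp add: ce_intg[symmetric] meas mult.commute)
  also have "\<dots> = (\<integral>\<^sup>+x. (SUP N. indicator A x * nn_cond_exp P (G n) (f N) x) \<partial>P)"
  proof (rule nn_integral_monotone_convergence_SUP_AE[symmetric])
    show "AE x in P. indicator A x * nn_cond_exp P (G n) (f N) x \<le> indicator A x * nn_cond_exp P (G n) (f (Suc N)) x" for N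
      using sigma_finite_subalgebra.nn_cond_exp_mono[OF sfs inc[of N] meas meas]
      by (rule AE_mp) (auto intro!: AE_I2 mult_left_mono)
    show "(\<lambda>x. indicator A x * nn_cond_exp P (G n) (f N) x) \<in> borel_measurable P" for N by measurable
  qed
  also have "\<dots> = (\<integral>\<^sup>+x\<in>A. (SUP N. nn_cond_exp P (G n) (f N) x) \<partial>P)"
    by (simp add: SUP_mult_left_ennreal mult.commute)
  finally show "(\<integral>\<^sup>+x\<in>A. (SUP N. f N x) \<partial>P) = (\<integral>\<^sup>+x\<in>A. (SUP N. nn_cond_exp P (G n) (f N) x) \<partial>P)" .
qed

end

context snl
begin

lemma lsn_super:
  assumes "enat (n + 1) \<le> r"
  shows "AE x in P. nn_cond_exp P (G n) (lsn P G X r (n + 1)) x \<le> lsn P G X r n x"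
proof -
  have e: "AE x in P. (SUP N. nn_cond_exp P (G n) (snell P G X (hcap r N) (n + 1)) x)
      = nn_cond_exp P (G n) (\<lambda>x. SUP N. snell P G X (hcap r N) (n + 1) x) x"
    by (rule ce_SUP) (simp_all add: snell_mono_hcap)
  have each: "AE x in P. nn_cond_exp P (G n) (snell P G X (hcap r N) (n + 1)) x \<le> snell P G X (hcap r N) n x" for N
  proof (cases "n < hcap r N")
    case True
    show ?thesis unfolding snell_below[OF True] by (auto intro!: AE_I2)
  next
    case False
    then have "snell P G X (hcap r N) (n + 1) = (\<lambda>_. 0)" by (simp add: snell_above)
    then show ?thesis using ce_zero[of n] by (simp add: eventually_mono)
  qed
  then have "AE x in P. \<forall>N. nn_cond_exp P (G n) (snell P G X (hcap r N) (n + 1)) x \<le> snell P G X (hcap r N) n x"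
    by (simp add: AE_all_countable)
  with e show ?thesis
  proof (eventually_elim)
    case (elim x)
    have "nn_cond_exp P (G n) (lsn P G X r (n + 1)) x = (SUP N. nn_cond_exp P (G n) (snell P G X (hcap r N) (n + 1)) x)"
      using elim(1) by (simp add: lsn_def)
    also have "\<dots> \<le> (SUP N. snell P G X (hcap r N) n x)" by (rule SUP_mono) (use elim(2) in blast)
    finally show ?case by (simp add: lsn_def)
  qed
qed

lemma lsn_int0: "(\<integral>\<^sup>+x. lsn P G X r 0 x \<partial>P) = (SUP N. \<integral>\<^sup>+x. snell P G X (hcap r N) 0 x \<partial>P)"
  unfolding lsn_def by (rule nn_integral_monotone_convergence_SUP_AE) (simp_all add: snell_mono_hcap)

lemma lsn_int_le: "enat n \<le> r \<Longrightarrow> (\<integral>\<^sup>+x. lsn P G X r n x \<partial>P) \<le> (\<integral>\<^sup>+x. lsn P G X r 0 x \<partial>P)"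
proof (induction n)
  case (Suc n)
  have r: "enat (n + 1) \<le> r" using Suc.prems by simp
  have rn: "enat n \<le> r" using Suc.prems by (simp add: order_trans[OF _ Suc.prems])
  have "(\<integral>\<^sup>+x. lsn P G X r (Suc n) x \<partial>P) = (\<integral>\<^sup>+x. 1 * nn_cond_exp P (G n) (lsn P G X r (n + 1)) x \<partial>P)"
    using ce_intg[of "\<lambda>_. 1" n "lsn P G X r (n + 1)"] by simp
  also have "\<dots> \<le> (\<integral>\<^sup>+x. lsn P G X r n x \<partial>P)"
    by (rule nn_integral_mono_AE) (use lsn_super[OF r] in simp)
  also have "\<dots> \<le> (\<integral>\<^sup>+x. lsn P G X r 0 x \<partial>P)" by (rule Suc.IH[OF rn])
  finally show ?case .
qed simp

end


context snl
begin

lemma otq_meas: "Measurable.pred (G k) (otq P G X h k)"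
proof -
  have [measurable]: "X k \<in> borel_measurable (G k)" by (rule Xmeas)
  show ?thesis unfolding otq_def[abs_def] by measurable
qed

lemma otq_measP[measurable]: "Measurable.pred P (otq P G X h k)"
  by (rule measP[OF otq_meas])

lemma otq_h: "otq P G X h h \<omega>" by (simp add: otq_def)

lemma otau_le: "otau P G X h \<omega> \<le> h"
  unfolding otau_def by (rule Least_le) (rule otq_h)

lemma otau_q: "otq P G X h (otau P G X h \<omega>) \<omega>"
  unfolding otau_def by (rule LeastI) (rule otq_h)

lemma otau_notq: "k < otau P G X h \<omega> \<Longrightarrow> \<not> otq P G X h k \<omega>"
  unfolding otau_def by (rule not_less_Least)

lemma otau_le_iff: "otau P G X h \<omega> \<le> n \<longleftrightarrow> (\<exists>k\<le>n. otq P G X h k \<omega>)"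
proof
  assume "otau P G X h \<omega> \<le> n" then show "\<exists>k\<le>n. otq P G X h k \<omega>" using otau_q by blast
next
  assume "\<exists>k\<le>n. otq P G X h k \<omega>"
  then obtain k where "k \<le> n" "otq P G X h k \<omega>" by blast
  then show "otau P G X h \<omega> \<le> n" unfolding otau_def by (meson Least_le order_trans)
qed

lemma otau_stop: "{\<omega> \<in> space P. enat (otau P G X h \<omega>) \<le> enat n} \<in> sets (G n)"
proof -
  have "{\<omega> \<in> space P. enat (otau P G X h \<omega>) \<le> enat n} = (\<Union>k\<in>{..n}. {\<omega> \<in> space (G k). otq P G X h k \<omega>})"
    by (auto simp: otau_le_iff space_G)
  also have "\<dots> \<in> sets (G n)"
  proof (rule sets.finite_UN)
    fix k assume "k \<in> {..n}"
    then have "{\<omega> \<in> space (G k). otq P G X h k \<omega>} \<in> sets (G k)" using otq_meas[of h k] by (simp add: pred_def)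
    then show "{\<omega> \<in> space (G k). otq P G X h k \<omega>} \<in> sets (G n)" using incr_le[of k n] \<open>k \<in> {..n}\<close> by auto
  qed simp
  finally show ?thesis .
qed

lemma otau_meas[measurable]: "otau P G X h \<in> measurable P (count_space UNIV)"
  unfolding otau_def[abs_def] by measurable

lemma Xtau_meas[measurable]: "(\<lambda>\<omega>. X (otau P G X h \<omega>) \<omega>) \<in> borel_measurable P"
  by (rule measurable_compose_countable[where f="\<lambda>i \<omega>. X i \<omega>"]) simp_all

lemma snell_value: "(\<integral>\<^sup>+\<omega>. snell P G X h 0 \<omega> \<partial>P) = (\<integral>\<^sup>+\<omega>. X (otau P G X h \<omega>) \<omega> \<partial>P)"
proof -
  let ?t = "otau P G X h"
  define W where "W k \<omega> = (if ?t \<omega> < k then X (?t \<omega>) \<omega> else snell P G X h k \<omega>)" for k \<omega>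
  have Wm[measurable]: "W k \<in> borel_measurable P" for k unfolding W_def by measurable
  have step: "(\<integral>\<^sup>+\<omega>. W k \<omega> \<partial>P) = (\<integral>\<^sup>+\<omega>. W (Suc k) \<omega> \<partial>P)" if kh: "k < h" for k
  proof -
    define D where "D = {\<omega> \<in> space P. k < ?t \<omega>}"
    define C where "C = nn_cond_exp P (G k) (snell P G X h (Suc k))"
    have D: "D \<in> sets (G k)"
    proof -
      have "D = space (G k) - {\<omega> \<in> space P. enat (?t \<omega>) \<le> enat k}"
        by (auto simp: D_def space_G)
      then show ?thesis using otau_stop[of h k] by simp
    qed
    have [measurable]: "D \<in> sets P" by (rule sets_G[OF D])
    have [measurable]: "C \<in> borel_measurable P" unfolding C_def by simp
    have e1: "W k \<omega> = W (Suc k) \<omega> * indicator (space P - D) \<omega> + C \<omega> * indicator D \<omega>" if "\<omega> \<in> space P" for \<omega>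
    proof (cases "?t \<omega> < k")
      case True then show ?thesis using that by (simp add: W_def D_def)
    next
      case False
      show ?thesis
      proof (cases "?t \<omega> = k")
        case True
        then have q: "otq P G X h k \<omega>" using otau_q[of h \<omega>] by simp
        then have "C \<omega> \<le> X k \<omega>" using kh by (simp add: otq_def C_def)
        then have "snell P G X h k \<omega> = X k \<omega>" using kh by (simp add: snell_below C_def)
        then show ?thesis using that True by (simp add: W_def D_def)
      next
        case F2: False
        with False have gt: "k < ?t \<omega>" by simp
        then have "\<not> otq P G X h k \<omega>" by (rule otau_notq)
        then have "X k \<omega> < C \<omega>" by (simp add: otq_def C_def not_le)
        then have "snell P G X h k \<omega> = C \<omega>" using kh by (simp add: snell_below C_def)
        then show ?thesis using that gt by (simp add: W_def D_def)
      qed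
    qed
    have e2: "W (Suc k) \<omega> = W (Suc k) \<omega> * indicator (space P - D) \<omega> + snell P G X h (Suc k) \<omega> * indicator D \<omega>"
      if "\<omega> \<in> space P" for \<omega>
      using that by (auto simp: W_def D_def indicator_def)
    have "(\<integral>\<^sup>+\<omega>. W k \<omega> \<partial>P) = (\<integral>\<^sup>+\<omega>. W (Suc k) \<omega> * indicator (space P - D) \<omega> \<partial>P) + (\<integral>\<^sup>+\<omega>. C \<omega> * indicator D \<omega> \<partial>P)"
      by (subst nn_integral_add[symmetric]) (auto intro!: nn_integral_cong simp: e1)
    also have "(\<integral>\<^sup>+\<omega>. C \<omega> * indicator D \<omega> \<partial>P) = (\<integral>\<^sup>+\<omega>. snell P G X h (Suc k) \<omega> * indicator D \<omega> \<partial>P)"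
    proof -
      have [measurable]: "indicator D \<in> borel_measurable (G k)" using D by simp
      have "(\<integral>\<^sup>+\<omega>. C \<omega> * indicator D \<omega> \<partial>P) = (\<integral>\<^sup>+\<omega>. indicator D \<omega> * C \<omega> \<partial>P)" by (simp add: mult.commute)
      also have "\<dots> = (\<integral>\<^sup>+\<omega>. indicator D \<omega> * snell P G X h (Suc k) \<omega> \<partial>P)"
        unfolding C_def by (rule ce_intg) simp_all
      finally show ?thesis by (simp add: mult.commute)
    qed
    also have "(\<integral>\<^sup>+\<omega>. W (Suc k) \<omega> * indicator (space P - D) \<omega> \<partial>P) + (\<integral>\<^sup>+\<omega>. snell P G X h (Suc k) \<omega> * indicator D \<omega> \<partial>P)
        = (\<integral>\<^sup>+\<omega>. W (Suc k) \<omega> \<partial>P)"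
      by (subst nn_integral_add[symmetric]) (auto intro!: nn_integral_cong simp: e2[symmetric])
    finally show ?thesis .
  qed
  have "k \<le> h \<Longrightarrow> (\<integral>\<^sup>+\<omega>. W 0 \<omega> \<partial>P) = (\<integral>\<^sup>+\<omega>. W k \<omega> \<partial>P)" for k
  proof (induction k)
    case (Suc k) then show ?case using step[of k] by simp
  qed simp
  from this[of h] have "(\<integral>\<^sup>+\<omega>. W 0 \<omega> \<partial>P) = (\<integral>\<^sup>+\<omega>. W h \<omega> \<partial>P)" by simp
  moreover have "W 0 = snell P G X h 0" by (simp add: W_def fun_eq_iff)
  moreover have "W h \<omega> = X (?t \<omega>) \<omega>" for \<omega>
  proof (cases "?t \<omega> < h")
    case False
    then have "?t \<omega> = h" using otau_le[of h \<omega>] by simp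
    then show ?thesis by (simp add: W_def snell_top)
  qed (simp add: W_def)
  ultimately show ?thesis by simp
qed

end


lemma filt_of:
  assumes "prob_space P" "sets P = sets M" "filtration_seq M F"
  shows "filt P (F m)"
proof -
  have sp: "space P = space M" using assms(2) by (rule sets_eq_imp_space_eq)
  have sub: "subalgebra P (F m n)" for n
    using assms(3) sp assms(2) unfolding filtration_seq_def subalgebra_def by auto
  have incr: "sets (F m n) \<subseteq> sets (F m (Suc n))" for n
    using assms(3) unfolding filtration_seq_def by auto
  show ?thesis by (rule filt.intro[where G="F m", OF assms(1) sub incr])
qed

lemma snl_of:
  assumes "prob_space P" "sets P = sets M" "filtration_seq M F" "adapted_seq F E"
  shows "snl P (F m) (E m)"
proof -
  interpret filt P "F m" by (rule filt_of[OF assms(1-3)])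
  show ?thesis by unfold_locales (use assms(4) in \<open>simp add: adapted_seq_def\<close>)
qed

lemma zero_ST_fin:
  assumes probs: "\<forall>P\<in>Ps. prob_space P \<and> sets P = sets M" and filt: "filtration_seq M F"
  shows "(\<lambda>_. enat 0) \<in> ST_fin M Ps (F m) \<rho>"
proof -
  have "space M \<in> sets (F m n)" for n
    using filt sets.top[of "F m n"] unfolding filtration_seq_def subalgebra_def by auto
  moreover have "emeasure P (space M) = 1" if "P \<in> Ps" for P
    using probs that sets_eq_imp_space_eq[of P M] prob_space.emeasure_space_1[of P] by auto
  ultimately show ?thesis
    by (simp add: ST_fin_def ST_def is_stopping_time_def zero_enat_def[symmetric]) (metis zero_enat_def)
qed

lemma limsup_le_1_frequently:
  fixes f :: "nat \<Rightarrow> ennreal"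
  assumes "limsup f \<le> 1" "1 < c"
  shows "\<exists>N. \<forall>m\<ge>N. f m < c"
  using assms unfolding Limsup_le_iff eventually_sequentially by auto


lemma ST_AE:
  assumes P: "prob_space P" "sets P = sets M" and fi: "filt P G"
    and t: "t \<in> ST M Ps G \<rho>" and PP: "P \<in> Ps"
  shows "AE \<omega> in P. t \<omega> \<le> \<rho>" and "\<And>n. {\<omega> \<in> space P. t \<omega> \<le> enat n} \<in> sets (G n)"
proof -
  interpret filt P G by (rule fi)
  interpret prob_space P by (rule P(1))
  have sp: "space P = space M" using P(2) by (rule sets_eq_imp_space_eq)
  have st: "{\<omega> \<in> space P. t \<omega> \<le> enat n} \<in> sets (G n)" for n
    using t unfolding ST_def is_stopping_time_def sp by auto
  then show "\<And>n. {\<omega> \<in> space P. t \<omega> \<le> enat n} \<in> sets (G n)" .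
  define A where "A = {\<omega> \<in> space P. t \<omega> \<le> \<rho>}"
  have A: "A \<in> sets P"
  proof (cases \<rho>)
    case (enat R)
    then show ?thesis unfolding A_def using sets_G[OF st[of R]] by simp
  next
    case infinity
    then show ?thesis unfolding A_def by simp
  qed
  have "emeasure P A = 1" using t PP unfolding ST_def A_def sp by auto
  then have "prob A = 1" by (simp add: emeasure_eq_measure)
  then have "AE \<omega> in P. \<omega> \<in> A" using AE_in_set_eq_1[OF A] by simp
  then show "AE \<omega> in P. t \<omega> \<le> \<rho>" by (rule AE_mp) (auto simp: A_def intro!: AE_I2)
qed

lemma III_I:
  fixes M :: "'a measure" and Ps :: "'a measure set"
    and F :: "nat \<Rightarrow> nat \<Rightarrow> 'a measure"
    and E :: "nat \<Rightarrow> nat \<Rightarrow> 'a \<Rightarrow> ennreal"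
    and r :: "nat \<Rightarrow> enat"
    and L :: "nat \<Rightarrow> nat \<Rightarrow> 'a measure \<Rightarrow> 'a \<Rightarrow> ennreal"
  assumes probs: "\<forall>P\<in>Ps. prob_space P \<and> sets P = sets M"
    and filt: "filtration_seq M F"
    and adapt: "adapted_seq F E"
    and meas: "\<forall>P\<in>Ps. \<forall>m n. L m n P \<in> borel_measurable (F m n)"
    and ge: "\<forall>P\<in>Ps. \<forall>m n. AE \<omega> in P. E m n \<omega> \<le> L m n P \<omega>"
    and integ: "\<forall>P\<in>Ps. \<forall>m\<ge>m0. \<forall>n. enat n \<le> r m \<longrightarrow> (\<integral>\<^sup>+ \<omega>. L m n P \<omega> \<partial>P) < \<infinity>"
    and sup: "\<forall>P\<in>Ps. \<forall>m\<ge>m0. \<forall>n. enat (n + 1) \<le> r m \<longrightarrow>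
                  (AE \<omega> in P. nn_cond_exp P (F m n) (L m (n + 1) P) \<omega> \<le> L m n P \<omega>)"
    and lim: "limsup (\<lambda>m. SUP P\<in>Ps. \<integral>\<^sup>+ \<omega>. L m 0 P \<omega> \<partial>P) \<le> 1"
  shows "asym_eprocess M Ps F r E"
  unfolding asym_eprocess_def
proof (intro conjI ballI)
  show "adapted_seq F E" by fact
  fix \<tau> assume \<tau>: "\<tau> \<in> STseq M Ps F r"
  have ev: "(SUP P\<in>Ps. \<integral>\<^sup>+ \<omega>. stopped E m (\<tau> m) \<omega> \<partial>P) \<le> (SUP P\<in>Ps. \<integral>\<^sup>+ \<omega>. L m 0 P \<omega> \<partial>P)"
    if m: "m0 \<le> m" for m
  proof (rule SUP_mono)
    fix P assume PP: "P \<in> Ps"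
    have Pp: "prob_space P" "sets P = sets M" using probs PP by auto
    have fi: "filt P (F m)" by (rule filt_of[OF Pp filt])
    interpret filt P "F m" by (rule fi)
    have tm: "\<tau> m \<in> ST M Ps (F m) (r m)" using \<tau> by (simp add: STseq_def)
    have "(\<integral>\<^sup>+\<omega>. (case \<tau> m \<omega> of enat n \<Rightarrow> E m n \<omega> | \<infinity> \<Rightarrow> limsup (\<lambda>n. E m n \<omega>)) \<partial>P)
         \<le> (\<integral>\<^sup>+\<omega>. L m 0 P \<omega> \<partial>P)"
    proof (rule optional_stopping)
      show "L m n P \<in> borel_measurable (F m n)" for n using meas PP by auto
      show "AE \<omega> in P. E m n \<omega> \<le> L m n P \<omega>" for n using ge PP by auto
      show "{\<omega> \<in> space P. \<tau> m \<omega> \<le> enat n} \<in> sets (F m n)" for n by (rule ST_AE(2)[OF Pp fi tm PP])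
      show "AE \<omega> in P. \<tau> m \<omega> \<le> r m" by (rule ST_AE(1)[OF Pp fi tm PP])
      show "(\<integral>\<^sup>+\<omega>. L m 0 P \<omega> \<partial>P) < \<infinity>" using integ PP m by (auto simp: zero_enat_def[symmetric])
      show "AE \<omega> in P. nn_cond_exp P (F m n) (L m (n + 1) P) \<omega> \<le> L m n P \<omega>" if "enat (n + 1) \<le> r m" for n
        using sup PP m that by auto
    qed
    then show "\<exists>P'\<in>Ps. (\<integral>\<^sup>+ \<omega>. stopped E m (\<tau> m) \<omega> \<partial>P) \<le> (\<integral>\<^sup>+ \<omega>. L m 0 P' \<omega> \<partial>P')"
      using PP by (intro bexI[of _ P]) (simp_all add: stopped_def[abs_def])
  qed
  have "limsup (\<lambda>m. SUP P\<in>Ps. \<integral>\<^sup>+ \<omega>. stopped E m (\<tau> m) \<omega> \<partial>P)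
      \<le> limsup (\<lambda>m. SUP P\<in>Ps. \<integral>\<^sup>+ \<omega>. L m 0 P \<omega> \<partial>P)"
    by (rule Limsup_mono) (use ev in \<open>auto simp: eventually_sequentially\<close>)
  also have "\<dots> \<le> 1" by (rule lim)
  finally show "limsup (\<lambda>m. SUP P\<in>Ps. \<integral>\<^sup>+ \<omega>. stopped E m (\<tau> m) \<omega> \<partial>P) \<le> 1" .
qed

lemma II_III:
  fixes M :: "'a measure" and Ps :: "'a measure set"
    and F :: "nat \<Rightarrow> nat \<Rightarrow> 'a measure"
    and E :: "nat \<Rightarrow> nat \<Rightarrow> 'a \<Rightarrow> ennreal"
    and r :: "nat \<Rightarrow> enat"
  assumes probs: "\<forall>P\<in>Ps. prob_space P \<and> sets P = sets M"
    and filt: "filtration_seq M F"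
    and adapt: "adapted_seq F E"
    and ii: "\<forall>\<tau>\<in>STseq_fin M Ps F r.
               limsup (\<lambda>m. SUP P\<in>Ps. \<integral>\<^sup>+ \<omega>. stopped E m (\<tau> m) \<omega> \<partial>P) \<le> 1"
  shows "\<exists>(L :: nat \<Rightarrow> nat \<Rightarrow> 'a measure \<Rightarrow> 'a \<Rightarrow> ennreal) (m0::nat).
               (\<forall>P\<in>Ps. \<forall>m n. L m n P \<in> borel_measurable (F m n)) \<and>
               (\<forall>P\<in>Ps. \<forall>m n. AE \<omega> in P. E m n \<omega> \<le> L m n P \<omega>) \<and>
               (\<forall>P\<in>Ps. \<forall>m\<ge>m0. \<forall>n. enat n \<le> r m \<longrightarrow> (\<integral>\<^sup>+ \<omega>. L m n P \<omega> \<partial>P) < \<infinity>) \<and>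
               (\<forall>P\<in>Ps. \<forall>m\<ge>m0. \<forall>n. enat (n + 1) \<le> r m \<longrightarrow>
                  (AE \<omega> in P. nn_cond_exp P (F m n) (L m (n + 1) P) \<omega> \<le> L m n P \<omega>)) \<and>
               limsup (\<lambda>m. SUP P\<in>Ps. \<integral>\<^sup>+ \<omega>. L m 0 P \<omega> \<partial>P) \<le> 1"
proof -
  define Wv where "Wv m = (SUP P\<in>Ps. SUP \<tau>\<in>ST_fin M Ps (F m) (r m). \<integral>\<^sup>+ \<omega>. stopped E m \<tau> \<omega> \<partial>P)" for m
  have snlP: "snl P (F m) (E m)" if "P \<in> Ps" for P m
    using probs that by (intro snl_of[OF _ _ filt adapt]) auto
  have K: "(\<integral>\<^sup>+\<omega>. lsn P (F m) (E m) (r m) 0 \<omega> \<partial>P) \<le> Wv m" if PP: "P \<in> Ps" for P m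
  proof -
    interpret snl P "F m" "E m" by (rule snlP[OF PP])
    have sp: "space P = space M" using probs PP sets_eq_imp_space_eq by blast
    have "(\<integral>\<^sup>+\<omega>. lsn P (F m) (E m) (r m) 0 \<omega> \<partial>P) = (SUP N. \<integral>\<^sup>+x. snell P (F m) (E m) (hcap (r m) N) 0 x \<partial>P)"
      by (rule lsn_int0)
    also have "\<dots> \<le> Wv m"
    proof (rule SUP_least)
      fix N
      define h where "h = hcap (r m) N"
      define \<tau>' where "\<tau>' = (\<lambda>\<omega>. enat (otau P (F m) (E m) h \<omega>))"
      have "\<tau>' \<in> ST_fin M Ps (F m) (r m)"
        unfolding ST_fin_def ST_def is_stopping_time_def
      proof (intro CollectI conjI allI ballI)
        show "{\<omega> \<in> space M. \<tau>' \<omega> \<le> enat n} \<in> sets (F m n)" for n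
          using otau_stop[of h n] sp by (simp add: \<tau>'_def)
        fix P' assume P': "P' \<in> Ps"
        have "enat (otau P (F m) (E m) h \<omega>) \<le> r m" for \<omega>
          using otau_le[of h \<omega>] hcap_le[of "r m" N] unfolding h_def
          by (meson enat_ord_simps(1) order_trans)
        then have "{\<omega> \<in> space M. \<tau>' \<omega> \<le> r m} = space M" by (auto simp: \<tau>'_def)
        moreover have "emeasure P' (space M) = 1"
          using probs P' sets_eq_imp_space_eq[of P' M] prob_space.emeasure_space_1[of P'] by auto
        ultimately show "emeasure P' {\<omega> \<in> space M. \<tau>' \<omega> \<le> r m} = 1" by simp
      qed (simp_all add: \<tau>'_def)
      then have "(\<integral>\<^sup>+ \<omega>. stopped E m \<tau>' \<omega> \<partial>P) \<le> Wv m"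
        unfolding Wv_def using PP by (intro SUP_upper2[OF PP] SUP_upper) auto
      moreover have "(\<integral>\<^sup>+x. snell P (F m) (E m) h 0 x \<partial>P) = (\<integral>\<^sup>+ \<omega>. stopped E m \<tau>' \<omega> \<partial>P)"
        unfolding snell_value by (simp add: stopped_def \<tau>'_def)
      ultimately show "(\<integral>\<^sup>+x. snell P (F m) (E m) (hcap (r m) N) 0 x \<partial>P) \<le> Wv m" by (simp add: h_def)
    qed
    finally show ?thesis .
  qed
  have WL: "limsup Wv \<le> 1"
    unfolding Limsup_le_iff
  proof (intro allI impI)
    fix y :: ennreal assume y: "1 < y"
    show "\<forall>\<^sub>F m in sequentially. Wv m < y"
    proof (rule ccontr)
      assume "\<not> (\<forall>\<^sub>F m in sequentially. Wv m < y)"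
      then have H: "\<forall>N. \<exists>m\<ge>N. y \<le> Wv m" by (auto simp: eventually_sequentially not_less)
      obtain c where c: "1 < c" "c < y" using dense[OF y] by blast
      define good where "good m \<longleftrightarrow> (\<exists>\<tau>\<in>ST_fin M Ps (F m) (r m). \<exists>P\<in>Ps. c < \<integral>\<^sup>+ \<omega>. stopped E m \<tau> \<omega> \<partial>P)" for m
      have gW: "good m" if "c < Wv m" for m
        using that unfolding Wv_def good_def less_SUP_iff by blast
      define \<tau>s where "\<tau>s m = (if good m then (SOME \<tau>. \<tau> \<in> ST_fin M Ps (F m) (r m) \<and> (\<exists>P\<in>Ps. c < \<integral>\<^sup>+ \<omega>. stopped E m \<tau> \<omega> \<partial>P))
          else (\<lambda>_. enat 0))" for m
      have \<tau>s_good: "\<tau>s m \<in> ST_fin M Ps (F m) (r m) \<and> (\<exists>P\<in>Ps. c < \<integral>\<^sup>+ \<omega>. stopped E m (\<tau>s m) \<omega> \<partial>P)" if "good m" for m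
      proof -
        have "\<exists>\<tau>. \<tau> \<in> ST_fin M Ps (F m) (r m) \<and> (\<exists>P\<in>Ps. c < \<integral>\<^sup>+ \<omega>. stopped E m \<tau> \<omega> \<partial>P)"
          using that unfolding good_def by blast
        from someI_ex[OF this] show ?thesis using that by (simp add: \<tau>s_def)
      qed
      have "\<tau>s \<in> STseq_fin M Ps F r"
        unfolding STseq_fin_def
      proof (intro CollectI allI)
        fix m show "\<tau>s m \<in> ST_fin M Ps (F m) (r m)"
        proof (cases "good m")
          case True then show ?thesis using \<tau>s_good by blast
        next
          case False then show ?thesis using zero_ST_fin[OF probs filt] by (simp add: \<tau>s_def)
        qed
      qed
      with ii have "limsup (\<lambda>m. SUP P\<in>Ps. \<integral>\<^sup>+ \<omega>. stopped E m (\<tau>s m) \<omega> \<partial>P) \<le> 1" by blast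
      from limsup_le_1_frequently[OF this c(1)]
      obtain N where N: "\<forall>m\<ge>N. (SUP P\<in>Ps. \<integral>\<^sup>+ \<omega>. stopped E m (\<tau>s m) \<omega> \<partial>P) < c" by blast
      obtain m where m: "m \<ge> N" "y \<le> Wv m" using H by blast
      then have "good m" using c by (intro gW) simp
      then obtain P where PP: "P \<in> Ps" and "c < \<integral>\<^sup>+ \<omega>. stopped E m (\<tau>s m) \<omega> \<partial>P" using \<tau>s_good by blast
      then have "c < (SUP P\<in>Ps. \<integral>\<^sup>+ \<omega>. stopped E m (\<tau>s m) \<omega> \<partial>P)"
        using less_SUP_iff by blast
      then show False using N m by (meson not_less_iff_gr_or_eq order.strict_trans)
    qed
  qed
  obtain m0 where m0: "\<forall>m\<ge>m0. Wv m < 2"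
    using limsup_le_1_frequently[OF WL, of 2] by (auto simp: one_less_numeral_iff)
  define L where "L m n P = (if m0 \<le> m \<and> enat n \<le> r m then lsn P (F m) (E m) (r m) n else E m n)"
    for m n and P :: "'a measure"
  show ?thesis
  proof (intro exI[of _ L] exI[of _ m0] conjI ballI allI impI)
    fix P m n assume PP: "P \<in> Ps"
    interpret snl P "F m" "E m" by (rule snlP[OF PP])
    show "L m n P \<in> borel_measurable (F m n)"
      unfolding L_def using lsn_meas Xmeas by simp
    show "AE \<omega> in P. E m n \<omega> \<le> L m n P \<omega>"
      unfolding L_def using lsn_ge by (intro AE_I2) simp
  next
    fix P m n assume PP: "P \<in> Ps" and m: "m0 \<le> m" and n: "enat n \<le> r m"
    interpret snl P "F m" "E m" by (rule snlP[OF PP])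
    have "(\<integral>\<^sup>+ \<omega>. L m n P \<omega> \<partial>P) = (\<integral>\<^sup>+ \<omega>. lsn P (F m) (E m) (r m) n \<omega> \<partial>P)" using m n by (simp add: L_def)
    also have "\<dots> \<le> (\<integral>\<^sup>+ \<omega>. lsn P (F m) (E m) (r m) 0 \<omega> \<partial>P)" by (rule lsn_int_le[OF n])
    also have "\<dots> \<le> Wv m" by (rule K[OF PP])
    also have "\<dots> < 2" using m0 m by simp
    finally show "(\<integral>\<^sup>+ \<omega>. L m n P \<omega> \<partial>P) < \<infinity>" using less_trans by fastforce
  next
    fix P m n assume PP: "P \<in> Ps" and m: "m0 \<le> m" and n: "enat (n + 1) \<le> r m"
    interpret snl P "F m" "E m" by (rule snlP[OF PP])
    have n': "enat n \<le> r m" using n by (meson enat_ord_simps(1) le_add1 order_trans)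
    have "L m (n + 1) P = lsn P (F m) (E m) (r m) (n + 1)" "L m n P = lsn P (F m) (E m) (r m) n"
      using m n n' by (simp_all add: L_def)
    then show "AE \<omega> in P. nn_cond_exp P (F m n) (L m (n + 1) P) \<omega> \<le> L m n P \<omega>"
      using lsn_super[OF n] by simp
  next
    have "limsup (\<lambda>m. SUP P\<in>Ps. \<integral>\<^sup>+ \<omega>. L m 0 P \<omega> \<partial>P) \<le> limsup Wv"
    proof (rule Limsup_mono)
      show "\<forall>\<^sub>F m in sequentially. (SUP P\<in>Ps. \<integral>\<^sup>+ \<omega>. L m 0 P \<omega> \<partial>P) \<le> Wv m"
        unfolding eventually_sequentially
      proof (intro exI[of _ m0] allI impI)
        fix m assume m: "m0 \<le> m"
        show "(SUP P\<in>Ps. \<integral>\<^sup>+ \<omega>. L m 0 P \<omega> \<partial>P) \<le> Wv m"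
        proof (rule SUP_least)
          fix P assume PP: "P \<in> Ps"
          have "L m 0 P = lsn P (F m) (E m) (r m) 0" using m by (simp add: L_def zero_enat_def[symmetric])
          then show "(\<integral>\<^sup>+ \<omega>. L m 0 P \<omega> \<partial>P) \<le> Wv m" using K[OF PP, of m] by simp
        qed
      qed
    qed
    also have "\<dots> \<le> 1" by (rule WL)
    finally show "limsup (\<lambda>m. SUP P\<in>Ps. \<integral>\<^sup>+ \<omega>. L m 0 P \<omega> \<partial>P) \<le> 1" .
  qed
qed


theorem mainTheorem4:
  fixes M :: "'a measure" and Ps :: "'a measure set"
    and F :: "nat \<Rightarrow> nat \<Rightarrow> 'a measure"
    and E :: "nat \<Rightarrow> nat \<Rightarrow> 'a \<Rightarrow> ennreal"
    and r :: "nat \<Rightarrow> enat"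
  assumes probs: "\<forall>P\<in>Ps. prob_space P \<and> sets P = sets M"
    and filt: "filtration_seq M F"
    and adapt: "adapted_seq F E"
  shows "(asym_eprocess M Ps F r E \<longleftrightarrow>
            (\<forall>\<tau>\<in>STseq_fin M Ps F r.
               limsup (\<lambda>m. SUP P\<in>Ps. \<integral>\<^sup>+ \<omega>. stopped E m (\<tau> m) \<omega> \<partial>P) \<le> 1))
       \<and> (asym_eprocess M Ps F r E \<longleftrightarrow>
            (\<exists>(L :: nat \<Rightarrow> nat \<Rightarrow> 'a measure \<Rightarrow> 'a \<Rightarrow> ennreal) (m0::nat).
               (\<forall>P\<in>Ps. \<forall>m n. L m n P \<in> borel_measurable (F m n)) \<and>
               (\<forall>P\<in>Ps. \<forall>m n. AE \<omega> in P. E m n \<omega> \<le> L m n P \<omega>) \<and>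
               (\<forall>P\<in>Ps. \<forall>m\<ge>m0. \<forall>n. enat n \<le> r m \<longrightarrow> (\<integral>\<^sup>+ \<omega>. L m n P \<omega> \<partial>P) < \<infinity>) \<and>
               (\<forall>P\<in>Ps. \<forall>m\<ge>m0. \<forall>n. enat (n + 1) \<le> r m \<longrightarrow>
                  (AE \<omega> in P. nn_cond_exp P (F m n) (L m (n + 1) P) \<omega> \<le> L m n P \<omega>)) \<and>
               limsup (\<lambda>m. SUP P\<in>Ps. \<integral>\<^sup>+ \<omega>. L m 0 P \<omega> \<partial>P) \<le> 1))"
proof -
  have A: "asym_eprocess M Ps F r E \<Longrightarrow> (\<forall>\<tau>\<in>STseq_fin M Ps F r.
               limsup (\<lambda>m. SUP P\<in>Ps. \<integral>\<^sup>+ \<omega>. stopped E m (\<tau> m) \<omega> \<partial>P) \<le> 1)"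
    unfolding asym_eprocess_def STseq_fin_def STseq_def ST_fin_def by blast
  have B: "(\<forall>\<tau>\<in>STseq_fin M Ps F r.
               limsup (\<lambda>m. SUP P\<in>Ps. \<integral>\<^sup>+ \<omega>. stopped E m (\<tau> m) \<omega> \<partial>P) \<le> 1) \<Longrightarrow>
            (\<exists>(L :: nat \<Rightarrow> nat \<Rightarrow> 'a measure \<Rightarrow> 'a \<Rightarrow> ennreal) (m0::nat).
               (\<forall>P\<in>Ps. \<forall>m n. L m n P \<in> borel_measurable (F m n)) \<and>
               (\<forall>P\<in>Ps. \<forall>m n. AE \<omega> in P. E m n \<omega> \<le> L m n P \<omega>) \<and>
               (\<forall>P\<in>Ps. \<forall>m\<ge>m0. \<forall>n. enat n \<le> r m \<longrightarrow> (\<integral>\<^sup>+ \<omega>. L m n P \<omega> \<partial>P) < \<infinity>) \<and>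
               (\<forall>P\<in>Ps. \<forall>m\<ge>m0. \<forall>n. enat (n + 1) \<le> r m \<longrightarrow>
                  (AE \<omega> in P. nn_cond_exp P (F m n) (L m (n + 1) P) \<omega> \<le> L m n P \<omega>)) \<and>
               limsup (\<lambda>m. SUP P\<in>Ps. \<integral>\<^sup>+ \<omega>. L m 0 P \<omega> \<partial>P) \<le> 1)"
    by (rule II_III[OF probs filt adapt])
  have C: "(\<exists>(L :: nat \<Rightarrow> nat \<Rightarrow> 'a measure \<Rightarrow> 'a \<Rightarrow> ennreal) (m0::nat).
               (\<forall>P\<in>Ps. \<forall>m n. L m n P \<in> borel_measurable (F m n)) \<and>
               (\<forall>P\<in>Ps. \<forall>m n. AE \<omega> in P. E m n \<omega> \<le> L m n P \<omega>) \<and>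
               (\<forall>P\<in>Ps. \<forall>m\<ge>m0. \<forall>n. enat n \<le> r m \<longrightarrow> (\<integral>\<^sup>+ \<omega>. L m n P \<omega> \<partial>P) < \<infinity>) \<and>
               (\<forall>P\<in>Ps. \<forall>m\<ge>m0. \<forall>n. enat (n + 1) \<le> r m \<longrightarrow>
                  (AE \<omega> in P. nn_cond_exp P (F m n) (L m (n + 1) P) \<omega> \<le> L m n P \<omega>)) \<and>
               limsup (\<lambda>m. SUP P\<in>Ps. \<integral>\<^sup>+ \<omega>. L m 0 P \<omega> \<partial>P) \<le> 1) \<Longrightarrow> asym_eprocess M Ps F r E"
  proof -
    assume "\<exists>(L :: nat \<Rightarrow> nat \<Rightarrow> 'a measure \<Rightarrow> 'a \<Rightarrow> ennreal) (m0::nat).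
               (\<forall>P\<in>Ps. \<forall>m n. L m n P \<in> borel_measurable (F m n)) \<and>
               (\<forall>P\<in>Ps. \<forall>m n. AE \<omega> in P. E m n \<omega> \<le> L m n P \<omega>) \<and>
               (\<forall>P\<in>Ps. \<forall>m\<ge>m0. \<forall>n. enat n \<le> r m \<longrightarrow> (\<integral>\<^sup>+ \<omega>. L m n P \<omega> \<partial>P) < \<infinity>) \<and>
               (\<forall>P\<in>Ps. \<forall>m\<ge>m0. \<forall>n. enat (n + 1) \<le> r m \<longrightarrow>
                  (AE \<omega> in P. nn_cond_exp P (F m n) (L m (n + 1) P) \<omega> \<le> L m n P \<omega>)) \<and>
               limsup (\<lambda>m. SUP P\<in>Ps. \<integral>\<^sup>+ \<omega>. L m 0 P \<omega> \<partial>P) \<le> 1"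
    then obtain L :: "nat \<Rightarrow> nat \<Rightarrow> 'a measure \<Rightarrow> 'a \<Rightarrow> ennreal" and m0 :: nat where
      h: "(\<forall>P\<in>Ps. \<forall>m n. L m n P \<in> borel_measurable (F m n))"
         "(\<forall>P\<in>Ps. \<forall>m n. AE \<omega> in P. E m n \<omega> \<le> L m n P \<omega>)"
         "(\<forall>P\<in>Ps. \<forall>m\<ge>m0. \<forall>n. enat n \<le> r m \<longrightarrow> (\<integral>\<^sup>+ \<omega>. L m n P \<omega> \<partial>P) < \<infinity>)"
         "(\<forall>P\<in>Ps. \<forall>m\<ge>m0. \<forall>n. enat (n + 1) \<le> r m \<longrightarrow>
                  (AE \<omega> in P. nn_cond_exp P (F m n) (L m (n + 1) P) \<omega> \<le> L m n P \<omega>))"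
         "limsup (\<lambda>m. SUP P\<in>Ps. \<integral>\<^sup>+ \<omega>. L m 0 P \<omega> \<partial>P) \<le> 1"
      by blast
    show ?thesis by (rule III_I[OF probs filt adapt h])
  qed
  show ?thesis using A B C by blast
qed

end
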